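(* Let $\{Z_n\}$ be a Galton–Watson branching process with $Z_0=1$ and $Z_n=\sum_{i=1}^{Z_{n-1}}\xi_{n,i}$, where $\{\xi_{n,i}\}$ are i.i.d. nonnegative integer-valued random variables with generic copy $\xi$, and let $\alpha=E\xi<1$. If $\xi$ is regularly varying with index $\kappa>1$, i.e. $P(\xi>x)=x^{-\kappa}L(x)$ with $L$ slowly varying, then for every $n\ge1$, as $x\to\infty$, $$P(Z_n>x)\sim \frac{\alpha^n-\alpha^{\kappa n}}{\alpha-\alpha^{\kappa}}P(\xi>x).$$
   Context: A function $L$ is slowly varying if $L(tx)/L(x)\to1$ as $x\to\infty$ for all $t>0$. $f\sim g$ means $f(x)/g(x)\to 1$ as $x\to\infty$. *)

theory Defs
  imports "HOL-Probability.Probability" "HOL-Library.Landau_Symbols"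
begin

definition slowly_varying :: "(real \<Rightarrow> real) \<Rightarrow> bool" where
  "slowly_varying L \<longleftrightarrow> (\<forall>t>0. ((\<lambda>x. L (t * x) / L x) \<longlongrightarrow> 1) at_top)"

fun gw_Z :: "(nat \<Rightarrow> nat \<Rightarrow> 'a \<Rightarrow> nat) \<Rightarrow> nat \<Rightarrow> 'a \<Rightarrow> nat" where
  "gw_Z \<xi> 0 \<omega> = 1"
| "gw_Z \<xi> (Suc n) \<omega> = (\<Sum>i\<in>{1..gw_Z \<xi> n \<omega>}. \<xi> (Suc n) i \<omega>)"

end

theory Submission
  imports Defs "HOL-Real_Asymp.Real_Asymp"
begin

lemma doubling_upper:
  fixes G :: "real \<Rightarrow> real"
  assumes a: "0 < a" and x0: "1 \<le> x0"
    and dbl: "\<And>x. x \<ge> x0 \<Longrightarrow> G (2*x) \<le> 2 powr (-a) * G x"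
    and le1: "\<And>x. G x \<le> 1"
  shows "\<And>x. x \<ge> x0 \<Longrightarrow> G x \<le> (2*x0) powr a * x powr (-a)"
proof -
  define C where "C = (2*x0) powr a"
  have base: "G x \<le> C * x powr (-a)" if "x0 \<le> x" "x \<le> 2*x0" for x
  proof -
    have "C * x powr (-a) = (2*x0/x) powr a"
      unfolding powr_divide C_def powr_minus by (simp add: divide_inverse)
    also have "\<dots> \<ge> 1" using that x0 a by (intro ge_one_powr_ge_zero) auto
    finally show ?thesis using le1[of x] by linarith
  qed
  have ind: "\<forall>x. x0 \<le> x \<longrightarrow> x \<le> 2^(Suc j)*x0 \<longrightarrow> G x \<le> C * x powr (-a)" for j
  proof (induction j)
    case 0 then show ?case using base by auto
  next
    case (Suc j)
    show ?case
    proof (intro allI impI)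
      fix x assume h: "x0 \<le> x" "x \<le> 2^(Suc (Suc j))*x0"
      show "G x \<le> C * x powr (-a)"
      proof (cases "x \<le> 2*x0")
        case True then show ?thesis using base h by auto
      next
        case False
        then have h2: "x0 \<le> x/2" "x/2 \<le> 2^(Suc j)*x0" using h by auto
        have "G x = G (2*(x/2))" by simp
        also have "\<dots> \<le> 2 powr (-a) * G (x/2)" using dbl h2 by blast
        also have "\<dots> \<le> 2 powr (-a) * (C * (x/2) powr (-a))"
          using Suc.IH h2 by (intro mult_left_mono) auto
        also have "\<dots> = C * x powr (-a)"
          using x0 h by (simp add: powr_divide powr_minus field_simps)
        finally show ?thesis .
      qed
    qed
  qed
  fix x assume "x \<ge> x0"
  obtain j where "x/x0 < 2^j" using real_arch_pow[of 2 "x/x0"] by auto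
  then have "x < x0 * 2^j" using x0 by (simp add: field_simps)
  moreover have "x0 * 2^j \<le> x0 * (2 * 2^j)" using x0 by simp
  ultimately have "x \<le> 2^(Suc j)*x0" by (simp add: mult.commute)
  then show "G x \<le> (2*x0) powr a * x powr (-a)" using ind[of j] \<open>x \<ge> x0\<close> by (simp add: C_def)
qed

lemma doubling_lower:
  fixes G :: "real \<Rightarrow> real"
  assumes b: "0 < b" and x0: "1 \<le> x0"
    and dbl: "\<And>x. x \<ge> x0 \<Longrightarrow> G (2*x) \<ge> 2 powr (-b) * G x"
    and mono: "\<And>x y. x \<le> y \<Longrightarrow> G y \<le> G x"
    and nn: "\<And>x. 0 \<le> G x"
  shows "\<And>x. x \<ge> x0 \<Longrightarrow> G x \<ge> (G (2*x0) * x0 powr b) * x powr (-b)"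
proof -
  define C where "C = G (2*x0) * x0 powr b"
  have C0: "C \<ge> 0" using nn by (simp add: C_def)
  have base: "G x \<ge> C * x powr (-b)" if "x0 \<le> x" "x \<le> 2*x0" for x
  proof -
    have "C * x powr (-b) \<le> C * x0 powr (-b)"
      using that x0 b C0 by (intro mult_left_mono) (auto simp: powr_minus intro!: le_imp_inverse_le powr_mono2)
    also have "\<dots> = G (2*x0)" using x0 by (simp add: C_def powr_minus)
    also have "\<dots> \<le> G x" using that by (intro mono)
    finally show ?thesis .
  qed
  have ind: "\<forall>x. x0 \<le> x \<longrightarrow> x \<le> 2^(Suc j)*x0 \<longrightarrow> G x \<ge> C * x powr (-b)" for j
  proof (induction j)
    case 0 then show ?case using base by auto
  next
    case (Suc j)
    show ?case
    proof (intro allI impI)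
      fix x assume h: "x0 \<le> x" "x \<le> 2^(Suc (Suc j))*x0"
      show "G x \<ge> C * x powr (-b)"
      proof (cases "x \<le> 2*x0")
        case True then show ?thesis using base h by auto
      next
        case False
        then have h2: "x0 \<le> x/2" "x/2 \<le> 2^(Suc j)*x0" using h by auto
        have "C * x powr (-b) = 2 powr (-b) * (C * (x/2) powr (-b))"
          using x0 h by (simp add: powr_divide powr_minus field_simps)
        also have "\<dots> \<le> 2 powr (-b) * G (x/2)"
          using Suc.IH h2 by (intro mult_left_mono) auto
        also have "\<dots> \<le> G (2*(x/2))" using dbl h2 by blast
        finally show ?thesis by simp
      qed
    qed
  qed
  fix x assume "x \<ge> x0"
  obtain j where "x/x0 < 2^j" using real_arch_pow[of 2 "x/x0"] by auto
  then have "x < x0 * 2^j" using x0 by (simp add: field_simps)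
  moreover have "x0 * 2^j \<le> x0 * (2 * 2^j)" using x0 by simp
  ultimately have "x \<le> 2^(Suc j)*x0" by (simp add: mult.commute)
  then show "G x \<ge> (G (2*x0) * x0 powr b) * x powr (-b)" using ind[of j] \<open>x \<ge> x0\<close> by (simp add: C_def)
qed

locale rvs = prob_space M for M :: "'a measure" +
  fixes X :: "'a \<Rightarrow> nat" and \<kappa> :: real and L :: "real \<Rightarrow> real"
  assumes measX[measurable]: "X \<in> measurable M (count_space UNIV)"
    and kappa: "\<kappa> > 1"
    and slow: "slowly_varying L"
    and tailL: "\<And>x. x > 0 \<Longrightarrow> prob {\<omega> \<in> space M. real (X \<omega>) > x} = x powr (-\<kappa>) * L x"
begin

definition Fb :: "real \<Rightarrow> real" where "Fb x = prob {\<omega> \<in> space M. real (X \<omega>) > x}"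

lemma sets_X[measurable]: "{\<omega> \<in> space M. P (X \<omega>)} \<in> events"
proof -
  have "{\<omega> \<in> space M. P (X \<omega>)} = X -` {n. P n} \<inter> space M" by auto
  then show ?thesis using measurable_sets[OF measX, of "{n. P n}"] by simp
qed

lemma Fb_nonneg: "0 \<le> Fb x" by (simp add: Fb_def)
lemma Fb_le1: "Fb x \<le> 1" by (simp add: Fb_def)
lemma Fb_mono: "x \<le> y \<Longrightarrow> Fb y \<le> Fb x"
  unfolding Fb_def by (intro finite_measure_mono) auto

lemma Fb_ratio:
  assumes t: "t > 0"
  shows "((\<lambda>x. Fb (t*x) / Fb x) \<longlongrightarrow> t powr (-\<kappa>)) at_top"
proof -
  have "((\<lambda>x. t powr (-\<kappa>) * (L (t*x) / L x)) \<longlongrightarrow> t powr (-\<kappa>) * 1) at_top"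
    using slow t unfolding slowly_varying_def by (intro tendsto_mult_left) auto
  moreover have "\<forall>\<^sub>F x in at_top. t powr (-\<kappa>) * (L (t*x) / L x) = Fb (t*x) / Fb x"
    using eventually_gt_at_top[of 0]
  proof eventually_elim
    case (elim x)
    have "Fb (t*x) / Fb x = (t powr (-\<kappa>) * x powr (-\<kappa>) * L (t*x)) / (x powr (-\<kappa>) * L x)"
      using elim t by (simp add: Fb_def tailL powr_mult)
    also have "\<dots> = t powr (-\<kappa>) * (L (t*x) / L x)"
      using elim by (simp add: field_simps)
    finally show ?case by simp
  qed
  ultimately show ?thesis by (simp add: tendsto_cong)
qed

lemma Fb_pos_ev: "\<forall>\<^sub>F x in at_top. Fb x > 0"
proof -
  have "((\<lambda>x. Fb (1*x) / Fb x) \<longlongrightarrow> 1) at_top" using Fb_ratio[of 1] by simp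
  then have "\<forall>\<^sub>F x in at_top. Fb (1*x) / Fb x > 1/2" by (rule order_tendstoD) simp
  then show ?thesis
  proof eventually_elim
    case (elim x) then have "Fb x \<noteq> 0" by auto
    then show ?case using Fb_nonneg[of x] by simp
  qed
qed

lemma Potter_upper:
  assumes "0 < a" "a < \<kappa>"
  shows "\<exists>C x0. 0 < C \<and> 1 \<le> x0 \<and> (\<forall>x\<ge>x0. Fb x \<le> C * x powr (-a))"
proof -
  have "2 powr (-\<kappa>) < 2 powr (-a)" using assms by simp
  then have "\<forall>\<^sub>F x in at_top. Fb (2*x) / Fb x < 2 powr (-a)"
    using Fb_ratio[of 2] by (intro order_tendstoD) auto
  then have "\<forall>\<^sub>F x in at_top. Fb (2*x) \<le> 2 powr (-a) * Fb x"
    using Fb_pos_ev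
    by eventually_elim (simp add: divide_less_eq)
  then obtain N where N: "\<And>x. x \<ge> N \<Longrightarrow> Fb (2*x) \<le> 2 powr (-a) * Fb x"
    by (auto simp: eventually_at_top_linorder)
  define x0 where "x0 = max N 1"
  have "\<And>x. x \<ge> x0 \<Longrightarrow> Fb x \<le> (2*x0) powr a * x powr (-a)"
    by (rule doubling_upper[of a x0 Fb]) (use assms N Fb_le1 in \<open>auto simp: x0_def\<close>)
  then show ?thesis unfolding x0_def by (intro exI[of _ "(2*max N 1) powr a"] exI[of _ "max N 1"]) (auto simp: max_def)
qed

lemma Potter_lower:
  assumes "\<kappa> < b"
  shows "\<exists>c x0. 0 < c \<and> 1 \<le> x0 \<and> (\<forall>x\<ge>x0. Fb x \<ge> c * x powr (-b))"
proof -
  have b: "b > 0" using assms kappa by simp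
  have "2 powr (-b) < 2 powr (-\<kappa>)" using assms by simp
  then have "\<forall>\<^sub>F x in at_top. Fb (2*x) / Fb x > 2 powr (-b)"
    using Fb_ratio[of 2] by (intro order_tendstoD) auto
  then have "\<forall>\<^sub>F x in at_top. Fb (2*x) \<ge> 2 powr (-b) * Fb x \<and> Fb x > 0"
    using Fb_pos_ev
    by eventually_elim (simp add: less_divide_eq)
  then obtain N where N: "\<And>x. x \<ge> N \<Longrightarrow> Fb (2*x) \<ge> 2 powr (-b) * Fb x \<and> Fb x > 0"
    by (auto simp: eventually_at_top_linorder)
  define x0 where "x0 = max N 1"
  have "\<And>x. x \<ge> x0 \<Longrightarrow> Fb x \<ge> (Fb (2*x0) * x0 powr b) * x powr (-b)"
    by (rule doubling_lower[of b x0 Fb]) (use b N Fb_nonneg Fb_mono in \<open>auto simp: x0_def\<close>)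
  moreover have "Fb (2*x0) > 0" using N[of "2*x0"] by (auto simp: x0_def)
  ultimately show ?thesis using b
    by (intro exI[of _ "Fb (2*x0) * x0 powr b"] exI[of _ x0]) (auto simp: x0_def)
qed

lemma xFb_lim: "((\<lambda>x. x * Fb x) \<longlongrightarrow> 0) at_top"
proof -
  define a where "a = (\<kappa> + 1) / 2"
  have a: "1 < a" "a < \<kappa>" using kappa by (auto simp: a_def)
  obtain C x0 where C: "1 \<le> x0" "\<And>x. x \<ge> x0 \<Longrightarrow> Fb x \<le> C * x powr (-a)"
    using Potter_upper[of a] a by auto
  have lim: "((\<lambda>x::real. C * x powr (1 - a)) \<longlongrightarrow> 0) at_top"
    using a by (intro tendsto_mult_right_zero tendsto_neg_powr) (auto simp: filterlim_ident)
  show ?thesis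
  proof (rule tendsto_sandwich[OF _ _ tendsto_const lim])
    show "\<forall>\<^sub>F x in at_top. 0 \<le> x * Fb x"
      using eventually_ge_at_top[of 0] by eventually_elim (simp add: Fb_nonneg)
    show "\<forall>\<^sub>F x in at_top. x * Fb x \<le> C * x powr (1 - a)"
      using eventually_ge_at_top[of x0]
    proof eventually_elim
      case (elim x)
      then have "x * Fb x \<le> x * (C * x powr (-a))" using C by (intro mult_left_mono) auto
      also have "\<dots> = C * x powr (1 - a)" using elim C by (simp add: powr_diff powr_minus field_simps)
      finally show ?case .
    qed
  qed
qed


definition \<alpha> :: real where "\<alpha> = expectation (\<lambda>\<omega>. real (X \<omega>))"

lemma measX_real[measurable]: "(\<lambda>\<omega>. real (X \<omega>)) \<in> borel_measurable M"
  using measX by (rule measurable_compose) simp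

lemma Fb_nat: "Fb (real j) = prob {\<omega>\<in>space M. X \<omega> > j}"
  unfolding Fb_def by (rule arg_cong[where f=prob]) auto

lemma nn_X: "(\<integral>\<^sup>+\<omega>. ennreal (real (X \<omega>)) \<partial>M) = (\<Sum>j. ennreal (Fb (real j)))"
proof -
  have "(\<integral>\<^sup>+\<omega>. ennreal (real (X \<omega>)) \<partial>M) = (\<integral>\<^sup>+\<omega>. (\<Sum>j. indicator {\<omega>\<in>space M. X \<omega> > j} \<omega>) \<partial>M)"
  proof (intro nn_integral_cong)
    fix \<omega> assume w: "\<omega> \<in> space M"
    have "(\<Sum>j. indicator {\<omega>\<in>space M. X \<omega> > j} \<omega> :: ennreal) = (\<Sum>j<X \<omega>. indicator {\<omega>\<in>space M. X \<omega> > j} \<omega>)"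
      by (rule suminf_finite) (use w in \<open>auto simp: indicator_def\<close>)
    also have "\<dots> = (\<Sum>j<X \<omega>. 1)" using w by (intro sum.cong) (auto simp: indicator_def)
    also have "\<dots> = ennreal (real (X \<omega>))" by (simp add: ennreal_of_nat_eq_real_of_nat)
    finally show "ennreal (real (X \<omega>)) = (\<Sum>j. indicator {\<omega>\<in>space M. X \<omega> > j} \<omega>)" by simp
  qed
  also have "\<dots> = (\<Sum>j. \<integral>\<^sup>+\<omega>. indicator {\<omega>\<in>space M. X \<omega> > j} \<omega> \<partial>M)"
    by (rule nn_integral_suminf) simp
  also have "\<dots> = (\<Sum>j. ennreal (Fb (real j)))"
    by (simp add: Fb_nat emeasure_eq_measure)
  finally show ?thesis .
qed

lemma summable_Fb: "summable (\<lambda>j. Fb (real j))"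
proof -
  define a where "a = (\<kappa> + 1) / 2"
  have a: "1 < a" "a < \<kappa>" using kappa by (auto simp: a_def)
  obtain C x0 where C: "1 \<le> x0" "\<And>x. x \<ge> x0 \<Longrightarrow> Fb x \<le> C * x powr (-a)"
    using Potter_upper[of a] a by auto
  show ?thesis
  proof (rule summable_comparison_test_ev)
    show "summable (\<lambda>j. C * real j powr (-a))"
      using a by (intro summable_mult) (simp add: summable_real_powr_iff)
    have "\<forall>\<^sub>F j in sequentially. real j \<ge> x0"
      using filterlim_real_sequentially unfolding filterlim_at_top by blast
    then show "\<forall>\<^sub>F j in sequentially. norm (Fb (real j)) \<le> C * real j powr (-a)"
      by eventually_elim (use C Fb_nonneg in auto)
  qed
qed

lemma integrable_X: "integrable M (\<lambda>\<omega>. real (X \<omega>))"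
proof (rule integrableI_nn_integral_finite)
  show "(\<integral>\<^sup>+\<omega>. ennreal (real (X \<omega>)) \<partial>M) = ennreal (\<Sum>j. Fb (real j))"
    unfolding nn_X using summable_Fb Fb_nonneg
    by (intro sums_unique[symmetric] sums_ennreal[THEN iffD2] summable_sums) (auto intro: suminf_nonneg)
qed auto

lemma alpha_sums: "(\<lambda>j. Fb (real j)) sums \<alpha>"
proof -
  have "ennreal \<alpha> = (\<integral>\<^sup>+\<omega>. ennreal (real (X \<omega>)) \<partial>M)"
    unfolding \<alpha>_def by (rule nn_integral_eq_integral[OF integrable_X, symmetric]) auto
  also have "\<dots> = ennreal (\<Sum>j. Fb (real j))"
    unfolding nn_X using summable_Fb Fb_nonneg
    by (intro sums_unique[symmetric] sums_ennreal[THEN iffD2] summable_sums) (auto intro: suminf_nonneg)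
  finally have "\<alpha> = (\<Sum>j. Fb (real j))"
    using summable_Fb Fb_nonneg by (subst (asm) ennreal_inj) (auto simp: \<alpha>_def intro: suminf_nonneg)
  then show ?thesis using summable_Fb by (simp add: summable_sums)
qed

lemma alpha_pos: "\<alpha> > 0"
proof -
  obtain N where N: "\<And>x. x \<ge> N \<Longrightarrow> Fb x > 0" using Fb_pos_ev by (auto simp: eventually_at_top_linorder)
  define j where "j = nat \<lceil>N\<rceil>"
  have "real j \<ge> N" by (simp add: j_def) linarith
  then have "0 < Fb (real j)" using N by auto
  also have "\<dots> = (\<Sum>i\<in>{j}. Fb (real i))" by simp
  also have "\<dots> \<le> (\<Sum>i. Fb (real i))" by (rule sum_le_suminf) (use summable_Fb Fb_nonneg in auto)
  finally show ?thesis using sums_unique[OF alpha_sums] by simp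
qed

lemma alpha_nonneg: "\<alpha> \<ge> 0" using alpha_pos by simp

lemma Emin: "expectation (\<lambda>\<omega>. min (real (X \<omega>)) (real T)) = (\<Sum>j<T. Fb (real j))"
proof -
  have "expectation (\<lambda>\<omega>. min (real (X \<omega>)) (real T)) = expectation (\<lambda>\<omega>. \<Sum>j<T. indicator {\<omega>\<in>space M. X \<omega> > j} \<omega>)"
  proof (intro Bochner_Integration.integral_cong refl)
    fix \<omega> assume w: "\<omega> \<in> space M"
    have "(\<Sum>j<T. indicator {\<omega>\<in>space M. X \<omega> > j} \<omega> :: real) = (\<Sum>j\<in>{..<T} \<inter> {..<X \<omega>}. 1)"
      using w by (intro sum.mono_neutral_cong_right) (auto simp: indicator_def)
    also have "{..<T} \<inter> {..<X \<omega>} = {..<min T (X \<omega>)}" by auto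
    finally show "min (real (X \<omega>)) (real T) = (\<Sum>j<T. indicator {\<omega>\<in>space M. X \<omega> > j} \<omega>)" by simp
  qed
  also have "\<dots> = (\<Sum>j<T. expectation (indicator {\<omega>\<in>space M. X \<omega> > j}))"
    by (rule Bochner_Integration.integral_sum) (auto intro!: integrable_real_indicator simp: less_top[symmetric])
  also have "\<dots> = (\<Sum>j<T. Fb (real j))" by (simp add: Fb_nat)
  finally show ?thesis .
qed

lemma Emin_tendsto: "((\<lambda>T. expectation (\<lambda>\<omega>. min (real (X \<omega>)) (real T))) \<longlonglongrightarrow> \<alpha>)"
  unfolding Emin using alpha_sums by (simp add: sums_def)

end

lemma bernoulli_upper:
  fixes p :: real assumes "0 \<le> p" "p \<le> 1"
  shows "(1 - p)^k \<le> 1 - real k * p + (real k)^2 * p^2"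
proof (induction k)
  case 0 then show ?case by simp
next
  case (Suc k)
  have "(1 - p)^(Suc k) = (1 - p) * (1 - p)^k" by simp
  also have "\<dots> \<le> (1 - p) * (1 - real k * p + (real k)^2 * p^2)"
    using Suc.IH assms by (intro mult_left_mono) auto
  also have "\<dots> \<le> 1 - real (Suc k) * p + (real (Suc k))^2 * p^2"
  proof -
    have "(1 - p) * (1 - real k * p + (real k)^2 * p^2) = 1 - real (Suc k) * p + (real k * p^2 + (real k)^2 * p^2) - (real k)^2 * p^3"
      by (simp add: algebra_simps power2_eq_square power3_eq_cube)
    also have "\<dots> \<le> 1 - real (Suc k) * p + (real k * p^2 + (real k)^2 * p^2)"
      using assms by simp
    also have "real k * p^2 + (real k)^2 * p^2 \<le> (real (Suc k))^2 * p^2"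
    proof -
      have "(real (Suc k))^2 * p^2 - (real k * p^2 + (real k)^2 * p^2) = (real k + 1) * p^2"
        by (simp add: algebra_simps power2_eq_square)
      moreover have "0 \<le> (real k + 1) * p^2" by simp
      ultimately show ?thesis by linarith
    qed
    finally show ?thesis by simp
  qed
  finally show ?case .
qed

lemma exp_pointwise:
  fixes w h s T :: real
  assumes "0 \<le> w" "w \<le> T" "h > 0" "s > 0" "h * s \<le> 1"
  shows "exp (h * w) \<le> 1 + h * (1 + h * s) * w + (if w > s then exp (h * T) else 0)"
proof (cases "w > s")
  case True
  have e: "exp (h * w) \<le> exp (h * T)" using assms by simp
  have nn: "0 \<le> h * (1 + h * s) * w" using assms by simp
  have "exp (h * w) \<le> 1 + h * (1 + h * s) * w + exp (h * T)" using e nn by linarith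
  then show ?thesis using True by simp
next
  case False
  have "h * w \<le> h * s" using assms False by (intro mult_left_mono) auto
  then have hw: "0 \<le> h * w" "h * w \<le> 1"
    using assms by (simp, linarith)
  have "exp (h * w) \<le> 1 + h * w + (h * w)^2" by (rule exp_bound) (use hw in auto)
  also have "(h * w)^2 = h * (h * w) * w" by (simp add: power2_eq_square)
  also have "\<dots> \<le> h * (h * s) * w"
    using assms False by (intro mult_right_mono mult_left_mono) auto
  finally show ?thesis using False by (simp add: algebra_simps)
qed

locale iidY = rvs +
  fixes Y :: "nat \<Rightarrow> 'a \<Rightarrow> nat"
  assumes measY[measurable]: "\<And>i. Y i \<in> measurable M (count_space UNIV)"
    and indepY: "indep_vars (\<lambda>_. count_space UNIV) Y UNIV"
    and distrY: "\<And>i. distr M (count_space UNIV) (Y i) = distr M (count_space UNIV) X"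
begin

lemma sets_Y[measurable]: "{\<omega> \<in> space M. P (Y i \<omega>)} \<in> events"
proof -
  have "{\<omega> \<in> space M. P (Y i \<omega>)} = Y i -` {n. P n} \<inter> space M" by auto
  then show ?thesis using measurable_sets[OF measY, of "{n. P n}"] by simp
qed

lemma probY: "prob {\<omega>\<in>space M. P (Y i \<omega>)} = prob {\<omega>\<in>space M. P (X \<omega>)}"
proof -
  have "prob {\<omega>\<in>space M. P (Y i \<omega>)} = measure (distr M (count_space UNIV) (Y i)) {n. P n}"
    by (subst measure_distr) (auto intro!: arg_cong[where f=prob])
  also have "\<dots> = measure (distr M (count_space UNIV) X) {n. P n}" by (simp add: distrY)
  also have "\<dots> = prob {\<omega>\<in>space M. P (X \<omega>)}"
    by (subst measure_distr) (auto intro!: arg_cong[where f=prob])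
  finally show ?thesis .
qed

lemma probY_Fb: "prob {\<omega>\<in>space M. real (Y i \<omega>) > y} = Fb y"
  unfolding Fb_def by (rule probY)

lemma intY:
  fixes f :: "nat \<Rightarrow> real"
  shows "integrable M (\<lambda>\<omega>. f (Y i \<omega>)) = integrable M (\<lambda>\<omega>. f (X \<omega>))"
    and "expectation (\<lambda>\<omega>. f (Y i \<omega>)) = expectation (\<lambda>\<omega>. f (X \<omega>))"
proof -
  have "integrable M (\<lambda>\<omega>. f (Y i \<omega>)) = integrable (distr M (count_space UNIV) (Y i)) f"
    by (rule integrable_distr_eq[symmetric]) auto
  also have "\<dots> = integrable (distr M (count_space UNIV) X) f" by (simp add: distrY)
  also have "\<dots> = integrable M (\<lambda>\<omega>. f (X \<omega>))" by (rule integrable_distr_eq) auto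
  finally show "integrable M (\<lambda>\<omega>. f (Y i \<omega>)) = integrable M (\<lambda>\<omega>. f (X \<omega>))" .
  have "expectation (\<lambda>\<omega>. f (Y i \<omega>)) = integral\<^sup>L (distr M (count_space UNIV) (Y i)) f"
    by (rule integral_distr[symmetric]) auto
  also have "\<dots> = integral\<^sup>L (distr M (count_space UNIV) X) f" by (simp add: distrY)
  also have "\<dots> = expectation (\<lambda>\<omega>. f (X \<omega>))" by (rule integral_distr) auto
  finally show "expectation (\<lambda>\<omega>. f (Y i \<omega>)) = expectation (\<lambda>\<omega>. f (X \<omega>))" .
qed

definition q :: "nat \<Rightarrow> real \<Rightarrow> real" where
  "q k x = prob {\<omega>\<in>space M. real (\<Sum>i<k. Y i \<omega>) > x}"

lemma q_nonneg: "0 \<le> q k x" by (simp add: q_def)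
lemma q_le1: "q k x \<le> 1" by (simp add: q_def)

lemma union_bound: "prob {\<omega>\<in>space M. \<exists>i<k. real (Y i \<omega>) > y} \<le> real k * Fb y"
proof -
  have "{\<omega>\<in>space M. \<exists>i<k. real (Y i \<omega>) > y} = (\<Union>i\<in>{..<k}. {\<omega>\<in>space M. real (Y i \<omega>) > y})" by auto
  then have "prob {\<omega>\<in>space M. \<exists>i<k. real (Y i \<omega>) > y} \<le> (\<Sum>i<k. prob {\<omega>\<in>space M. real (Y i \<omega>) > y})"
    using measure_UNION_le[of "{..<k}" "\<lambda>i. {\<omega>\<in>space M. real (Y i \<omega>) > y}" M] by simp
  also have "\<dots> = real k * Fb y" by (simp add: probY_Fb)
  finally show ?thesis .
qed

lemma pair_prob:
  assumes "i \<noteq> j"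
  shows "prob {\<omega>\<in>space M. real (Y i \<omega>) > y \<and> real (Y j \<omega>) > y} = Fb y ^ 2"
proof -
  have "prob (\<Inter>l\<in>{i,j}. Y l -` {n. real n > y} \<inter> space M) = (\<Prod>l\<in>{i,j}. prob (Y l -` {n. real n > y} \<inter> space M))"
    by (rule indep_varsD[OF indepY]) auto
  moreover have "(\<Inter>l\<in>{i,j}. Y l -` {n. real n > y} \<inter> space M) = {\<omega>\<in>space M. real (Y i \<omega>) > y \<and> real (Y j \<omega>) > y}"
    by auto
  moreover have "Y l -` {n. real n > y} \<inter> space M = {\<omega>\<in>space M. real (Y l \<omega>) > y}" for l by auto
  ultimately show ?thesis using assms by (simp add: probY_Fb power2_eq_square)
qed

lemma pair_bound: "prob {\<omega>\<in>space M. \<exists>i j. i < j \<and> j < k \<and> real (Y i \<omega>) > y \<and> real (Y j \<omega>) > y} \<le> (real k)^2 * Fb y ^ 2"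
proof -
  define P where "P = {(i,j). i < j \<and> j < (k::nat)}"
  have P: "P \<subseteq> {..<k} \<times> {..<k}" by (auto simp: P_def)
  then have finP: "finite P" by (rule finite_subset) auto
  have "card P \<le> card ({..<k} \<times> {..<k})" using P by (intro card_mono) auto
  then have cardP: "real (card P) \<le> (real k)^2" by (simp add: card_cartesian_product power2_eq_square flip: of_nat_mult)
  have "{\<omega>\<in>space M. \<exists>i j. i < j \<and> j < k \<and> real (Y i \<omega>) > y \<and> real (Y j \<omega>) > y} =
     (\<Union>p\<in>P. {\<omega>\<in>space M. real (Y (fst p) \<omega>) > y \<and> real (Y (snd p) \<omega>) > y})"
    by (auto simp: P_def; blast)
  then have "prob {\<omega>\<in>space M. \<exists>i j. i < j \<and> j < k \<and> real (Y i \<omega>) > y \<and> real (Y j \<omega>) > y}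
      \<le> (\<Sum>p\<in>P. prob {\<omega>\<in>space M. real (Y (fst p) \<omega>) > y \<and> real (Y (snd p) \<omega>) > y})"
    using measure_UNION_le[OF finP, of "\<lambda>p. {\<omega>\<in>space M. real (Y (fst p) \<omega>) > y \<and> real (Y (snd p) \<omega>) > y}" M]
    by simp
  also have "\<dots> = (\<Sum>p\<in>P. Fb y ^ 2)"
    by (intro sum.cong refl pair_prob) (auto simp: P_def)
  also have "\<dots> = real (card P) * Fb y ^ 2" by simp
  also have "\<dots> \<le> (real k)^2 * Fb y ^ 2" using cardP by (intro mult_right_mono) auto
  finally show ?thesis .
qed

lemma q_low1: "q k x \<ge> real k * Fb x - (real k)^2 * Fb x ^ 2"
proof (cases "k = 0")
  case True then show ?thesis by (simp add: q_nonneg)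
next
  case False
  have cX: "prob {\<omega>\<in>space M. real (X \<omega>) \<le> x} = 1 - Fb x"
  proof -
    have "{\<omega>\<in>space M. real (X \<omega>) \<le> x} = space M - {\<omega>\<in>space M. real (X \<omega>) > x}" by auto
    then show ?thesis by (simp add: prob_compl Fb_def)
  qed
  have "prob (\<Inter>i\<in>{..<k}. Y i -` {n. real n \<le> x} \<inter> space M) = (\<Prod>i\<in>{..<k}. prob (Y i -` {n. real n \<le> x} \<inter> space M))"
    by (rule indep_varsD[OF indepY]) (use False in auto)
  moreover have "(\<Inter>i\<in>{..<k}. Y i -` {n. real n \<le> x} \<inter> space M) = {\<omega>\<in>space M. \<forall>i<k. real (Y i \<omega>) \<le> x}"
    using False by auto
  moreover have "prob (Y i -` {n. real n \<le> x} \<inter> space M) = 1 - Fb x" for i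
  proof -
    have "Y i -` {n. real n \<le> x} \<inter> space M = {\<omega>\<in>space M. real (Y i \<omega>) \<le> x}" by auto
    then show ?thesis using probY[of "\<lambda>n. real n \<le> x" i] cX by simp
  qed
  ultimately have all: "prob {\<omega>\<in>space M. \<forall>i<k. real (Y i \<omega>) \<le> x} = (1 - Fb x)^k" by simp
  have "{\<omega>\<in>space M. \<exists>i<k. real (Y i \<omega>) > x} = space M - {\<omega>\<in>space M. \<forall>i<k. real (Y i \<omega>) \<le> x}" by auto
  then have ex: "prob {\<omega>\<in>space M. \<exists>i<k. real (Y i \<omega>) > x} = 1 - (1 - Fb x)^k"
    using all by (simp add: prob_compl)
  have "{\<omega>\<in>space M. \<exists>i<k. real (Y i \<omega>) > x} \<subseteq> {\<omega>\<in>space M. real (\<Sum>i<k. Y i \<omega>) > x}"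
  proof safe
    fix \<omega> i assume "\<omega> \<in> space M" "i < k" "real (Y i \<omega>) > x"
    moreover have "Y i \<omega> \<le> (\<Sum>i<k. Y i \<omega>)" using \<open>i < k\<close> by (intro member_le_sum) auto
    ultimately show "real (\<Sum>i<k. Y i \<omega>) > x" by linarith
  qed
  then have "1 - (1 - Fb x)^k \<le> q k x" unfolding q_def ex[symmetric]
    by (intro finite_measure_mono) auto
  moreover have "(1 - Fb x)^k \<le> 1 - real k * Fb x + (real k)^2 * Fb x ^ 2"
    by (rule bernoulli_upper) (auto simp: Fb_nonneg Fb_le1)
  ultimately show ?thesis by linarith
qed


lemma measY_comp[measurable]: "(\<lambda>\<omega>. f (Y i \<omega>) :: real) \<in> borel_measurable M"
  using measY by (rule measurable_compose) simp

lemma measX_comp[measurable]: "(\<lambda>\<omega>. f (X \<omega>) :: real) \<in> borel_measurable M"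
  using measX by (rule measurable_compose) simp

lemma int_bounded: 
  fixes f :: "'a \<Rightarrow> real"
  assumes "f \<in> borel_measurable M" "\<And>\<omega>. \<omega> \<in> space M \<Longrightarrow> \<bar>f \<omega>\<bar> \<le> B"
  shows "integrable M f"
  using assms by (intro integrable_const_bound[where B=B]) auto

lemma chernoff_core:
  assumes h: "h > 0" and s: "s > 0" "s < T" and hs: "h * s \<le> 1"
  shows "prob {\<omega>\<in>space M. (\<Sum>i<k. min (real (Y i \<omega>)) T) \<ge> z}
     \<le> exp (- h * z + real k * (h * \<alpha> * (1 + h * s) + exp (h * T) * Fb s))"
proof -
  define \<phi> where "\<phi> = expectation (\<lambda>\<omega>. exp (h * min (real (X \<omega>)) T))"
  define V where "V \<omega> = (\<Prod>i<k. exp (h * min (real (Y i \<omega>)) T))" for \<omega>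
  have T0: "T > 0" using s by simp
  have bndY: "\<bar>exp (h * min (real (Y i \<omega>)) T)\<bar> \<le> exp (h * T)" for i \<omega>
    using h by simp
  have intY': "integrable M (\<lambda>\<omega>. exp (h * min (real (Y i \<omega>)) T))" for i
    by (rule int_bounded[OF _ bndY]) simp
  have indep': "indep_vars (\<lambda>_. borel) (\<lambda>i \<omega>. exp (h * min (real (Y i \<omega>)) T)) {..<k}"
    by (rule indep_vars_compose2[OF indep_vars_subset[OF indepY]]) auto
  have EV: "expectation V = \<phi> ^ k"
  proof -
    have "expectation V = (\<Prod>i<k. expectation (\<lambda>\<omega>. exp (h * min (real (Y i \<omega>)) T)))"
      unfolding V_def by (rule indep_vars_lebesgue_integral[OF _ indep' intY']) auto
    also have "\<dots> = (\<Prod>i<k. \<phi>)" unfolding \<phi>_def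
      by (intro prod.cong refl) (rule intY(2)[of "\<lambda>n. exp (h * min (real n) T)"])
    finally show ?thesis by simp
  qed
  have intV: "integrable M V"
    unfolding V_def by (rule indep_vars_integrable[OF _ indep' intY']) auto
  have V_eq: "V \<omega> = exp (h * (\<Sum>i<k. min (real (Y i \<omega>)) T))" for \<omega>
    unfolding V_def by (simp add: sum_distrib_left exp_sum)
  have "prob {\<omega>\<in>space M. (\<Sum>i<k. min (real (Y i \<omega>)) T) \<ge> z} \<le> prob {\<omega>\<in>space M. exp (h * z) \<le> V \<omega>}"
    using h by (intro finite_measure_mono) (auto simp: V_eq V_def[symmetric])
  also have "\<dots> \<le> expectation V / exp (h * z)"
    by (rule integral_Markov_inequality_measure[OF intV, of "space M"]) (auto simp: V_def intro!: prod_nonneg)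
  also have "\<dots> = \<phi> ^ k / exp (h * z)" by (simp add: EV)
  also have "\<phi> ^ k \<le> exp (h * \<alpha> * (1 + h * s) + exp (h * T) * Fb s) ^ k"
  proof (rule power_mono)
    show "0 \<le> \<phi>" unfolding \<phi>_def by simp
    have "\<phi> \<le> expectation (\<lambda>\<omega>. 1 + h * (1 + h * s) * min (real (X \<omega>)) T + exp (h * T) * indicator {\<omega>\<in>space M. real (X \<omega>) > s} \<omega>)"
      unfolding \<phi>_def
    proof (rule integral_mono)
      show "integrable M (\<lambda>\<omega>. exp (h * min (real (X \<omega>)) T))"
        by (rule int_bounded[where B="exp (h*T)"]) (use h in auto)
      show "integrable M (\<lambda>\<omega>. 1 + h * (1 + h * s) * min (real (X \<omega>)) T + exp (h * T) * indicator {\<omega>\<in>space M. real (X \<omega>) > s} \<omega>)"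
      proof (rule int_bounded[where B="1 + h * (1 + h * s) * T + exp (h * T)"])
        fix \<omega> assume "\<omega> \<in> space M"
        have c: "0 \<le> h * (1 + h * s)" using h s by simp
        have m: "0 \<le> min (real (X \<omega>)) T" "min (real (X \<omega>)) T \<le> T" using T0 by auto
        have a1: "0 \<le> h * (1 + h * s) * min (real (X \<omega>)) T" using c m by simp
        have a2: "h * (1 + h * s) * min (real (X \<omega>)) T \<le> h * (1 + h * s) * T"
          using c m by (intro mult_left_mono) auto
        have i: "0 \<le> exp (h * T) * indicator {\<omega>\<in>space M. real (X \<omega>) > s} \<omega>"
                "exp (h * T) * indicator {\<omega>\<in>space M. real (X \<omega>) > s} \<omega> \<le> exp (h * T)"
          by (auto simp: indicator_def)
        show "\<bar>1 + h * (1 + h * s) * min (real (X \<omega>)) T + exp (h * T) * indicator {\<omega>\<in>space M. real (X \<omega>) > s} \<omega>\<bar>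
              \<le> 1 + h * (1 + h * s) * T + exp (h * T)"
          using a1 a2 i by linarith
      qed simp
      fix \<omega> assume w: "\<omega> \<in> space M"
      have "exp (h * min (real (X \<omega>)) T) \<le> 1 + h * (1 + h * s) * min (real (X \<omega>)) T + (if min (real (X \<omega>)) T > s then exp (h * T) else 0)"
        by (rule exp_pointwise) (use h s hs in auto)
      also have "(if min (real (X \<omega>)) T > s then exp (h * T) else 0) = exp (h * T) * indicator {\<omega>\<in>space M. real (X \<omega>) > s} \<omega>"
        using w s by (auto simp: indicator_def)
      finally show "exp (h * min (real (X \<omega>)) T) \<le> 1 + h * (1 + h * s) * min (real (X \<omega>)) T + exp (h * T) * indicator {\<omega>\<in>space M. real (X \<omega>) > s} \<omega>" .
    qed
    also have "\<dots> = 1 + h * (1 + h * s) * expectation (\<lambda>\<omega>. min (real (X \<omega>)) T) + exp (h * T) * Fb s"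
    proof -
      have i1: "integrable M (\<lambda>\<omega>. min (real (X \<omega>)) T)"
        by (rule int_bounded[where B=T]) (use T0 in auto)
      have i2: "integrable M (\<lambda>\<omega>. indicator {\<omega>\<in>space M. real (X \<omega>) > s} \<omega> :: real)"
        by (rule int_bounded[where B=1]) (auto simp: indicator_def)
      show ?thesis using i1 i2
        by (simp add: Bochner_Integration.integral_add integral_mult_right_zero Fb_def prob_space)
    qed
    also have "\<dots> \<le> 1 + h * (1 + h * s) * \<alpha> + exp (h * T) * Fb s"
    proof -
      have "expectation (\<lambda>\<omega>. min (real (X \<omega>)) T) \<le> \<alpha>"
        unfolding \<alpha>_def
        by (rule integral_mono[OF int_bounded[where B=T] integrable_X]) (use T0 in auto)
      then show ?thesis using h s by (intro add_mono mult_left_mono) auto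
    qed
    also have "\<dots> \<le> exp (h * \<alpha> * (1 + h * s) + exp (h * T) * Fb s)"
      using exp_ge_add_one_self[of "h * \<alpha> * (1 + h * s) + exp (h * T) * Fb s"] by (simp add: algebra_simps)
    finally show "\<phi> \<le> exp (h * \<alpha> * (1 + h * s) + exp (h * T) * Fb s)" .
  qed
  then have "\<phi> ^ k / exp (h * z) \<le> exp (h * \<alpha> * (1 + h * s) + exp (h * T) * Fb s) ^ k / exp (h * z)"
    by (intro divide_right_mono) auto
  also have "\<dots> = exp (- h * z + real k * (h * \<alpha> * (1 + h * s) + exp (h * T) * Fb s))"
    by (simp add: exp_of_nat_mult[symmetric] exp_add[symmetric] exp_diff[symmetric] exp_minus divide_inverse)
      (simp add: exp_minus[symmetric] exp_add[symmetric])
  finally show ?thesis by simp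
qed


lemma chernoff:
  assumes \<gamma>: "\<gamma> > 0"
  shows "\<exists>\<theta>>0. \<exists>E. (\<forall>x. E x \<ge> 0) \<and> ((%x. E x / Fb x) \<longlongrightarrow> 0) at_top \<and>
    (\<forall>\<^sub>F x in at_top. \<forall>k z. real k * \<alpha> \<le> x \<longrightarrow> real k * \<alpha> + \<gamma> * x \<le> z \<longrightarrow>
        prob {\<omega>\<in>space M. (\<Sum>i<k. min (real (Y i \<omega>)) (\<theta> * x)) \<ge> z} \<le> E x)"
proof -
  define a where "a = (\<kappa> + 1) / 2"
  have a: "1 < a" "a < \<kappa>" using kappa by (auto simp: a_def)
  obtain C x0 where C: "0 < C" "1 \<le> x0" "\<And>y. y \<ge> x0 \<Longrightarrow> Fb y \<le> C * y powr (-a)"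
    using Potter_upper[of a] a by auto
  obtain c x1 where c: "0 < c" "1 \<le> x1" "\<And>y. y \<ge> x1 \<Longrightarrow> Fb y \<ge> c * y powr (-(\<kappa>+1))"
    using Potter_lower[of "\<kappa>+1"] by auto
  define lam where "lam = (\<kappa> + 2) / \<gamma>"
  have lam: "lam > 0" "lam * \<gamma> = \<kappa> + 2" using \<gamma> kappa by (auto simp: lam_def)
  define \<theta> where "\<theta> = (a - 1) / (2 * lam)"
  have th: "\<theta> > 0" "lam * \<theta> = (a - 1) / 2" using a lam by (auto simp: \<theta>_def)
  define E where "E x = exp (lam^2 + 1) * x powr (-(\<kappa>+2))" for x
  have E0: "\<forall>x. E x \<ge> 0" by (simp add: E_def)
  have Elim: "((%x. E x / Fb x) \<longlongrightarrow> 0) at_top"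
  proof (rule tendsto_sandwich[OF _ _ tendsto_const])
    show "\<forall>\<^sub>F x in at_top. 0 \<le> E x / Fb x" using E0 Fb_nonneg by (auto intro!: always_eventually)
    show "\<forall>\<^sub>F x in at_top. E x / Fb x \<le> exp (lam^2 + 1) / c * x powr (-1)"
      using eventually_ge_at_top[of x1]
    proof eventually_elim
      case (elim x)
      have x: "x > 0" using elim c by simp
      have p1: "0 < c * x powr (-(\<kappa>+1))" using c x by simp
      have p2: "c * x powr (-(\<kappa>+1)) \<le> Fb x" using c(3) elim by simp
      have "E x / Fb x \<le> E x / (c * x powr (-(\<kappa>+1)))"
        using p1 p2 E0 by (intro divide_left_mono) (auto intro!: mult_pos_pos)
      also have "\<dots> = exp (lam^2 + 1) / c * (x powr (-(\<kappa>+2)) / x powr (-(\<kappa>+1)))"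
        by (simp add: E_def)
      also have "x powr (-(\<kappa>+2)) / x powr (-(\<kappa>+1)) = x powr (-1)"
        using x by (simp add: powr_diff[symmetric])
      finally show ?case .
    qed
    show "((%x. exp (lam^2 + 1) / c * x powr (-1)) \<longlongrightarrow> 0) at_top"
      by (intro tendsto_mult_right_zero tendsto_neg_powr) (auto simp: filterlim_ident)
  qed
  have lim1: "((%x. C / \<alpha> * (x powr (-(a-1)/2) * ln x powr (2*a))) \<longlongrightarrow> 0) at_top"
  proof (intro tendsto_mult_right_zero)
    show "((%x. x powr (-(a-1)/2) * ln x powr (2*a)) \<longlongrightarrow> 0) at_top" using a by real_asymp
  qed
  have ev: "\<forall>\<^sub>F x in at_top. x > 1 \<and> ln x \<ge> lam \<and> x / (ln x)^2 \<ge> x0 \<and> x / (ln x)^2 < \<theta> * x \<and>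
             C / \<alpha> * (x powr (-(a-1)/2) * ln x powr (2*a)) \<le> 1"
  proof (intro eventually_conj)
    show "\<forall>\<^sub>F x in at_top. x > (1::real)" by simp
    show "\<forall>\<^sub>F x in at_top. ln x \<ge> lam" by real_asymp
    show "\<forall>\<^sub>F x in at_top. x / (ln x)^2 \<ge> x0" by real_asymp
    show "\<forall>\<^sub>F x in at_top. x / (ln x)^2 < \<theta> * x" using th by real_asymp
    show "\<forall>\<^sub>F x in at_top. C / \<alpha> * (x powr (-(a-1)/2) * ln x powr (2*a)) \<le> 1"
      using order_tendstoD(2)[OF lim1, of 1] by (auto elim: eventually_mono)
  qed
  have main: "\<forall>\<^sub>F x in at_top. \<forall>k z. real k * \<alpha> \<le> x \<longrightarrow> real k * \<alpha> + \<gamma> * x \<le> z \<longrightarrow>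
        prob {\<omega>\<in>space M. (\<Sum>i<k. min (real (Y i \<omega>)) (\<theta> * x)) \<ge> z} \<le> E x"
    using ev
  proof eventually_elim
    case (elim x)
    have x1': "x > 1" and lx: "ln x \<ge> lam" and sx0: "x / (ln x)^2 \<ge> x0" and sT: "x / (ln x)^2 < \<theta> * x"
      and small: "C / \<alpha> * (x powr (-(a-1)/2) * ln x powr (2*a)) \<le> 1" using elim by auto
    show ?case
    proof (intro allI impI)
    fix k z assume kx: "real k * \<alpha> \<le> x" and kz: "real k * \<alpha> + \<gamma> * x \<le> z"
    have lnpos: "ln x > 0" using x1' by simp
    define h where "h = lam * ln x / x"
    define s where "s = x / (ln x)^2"
    have hpos: "h > 0" using lam lnpos x1' by (simp add: h_def)
    have spos: "s > 0" using lnpos x1' by (simp add: s_def)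
    have hs: "h * s = lam / ln x" using lnpos x1' by (simp add: h_def s_def power2_eq_square field_simps)
    have hs1: "h * s \<le> 1" using hs lx lnpos by (simp add: divide_le_eq)
    have core: "prob {\<omega>\<in>space M. (\<Sum>i<k. min (real (Y i \<omega>)) (\<theta> * x)) \<ge> z}
       \<le> exp (- h * z + real k * (h * \<alpha> * (1 + h * s) + exp (h * (\<theta> * x)) * Fb s))"
      by (rule chernoff_core) (use hpos spos sT hs1 in \<open>auto simp: s_def\<close>)
    have t1: "- h * z \<le> - h * (real k * \<alpha>) - h * \<gamma> * x"
      using kz hpos mult_left_mono[OF kz, of h] by (simp add: algebra_simps)
    have t2: "real k * (h * \<alpha> * (1 + h * s)) \<le> h * (real k * \<alpha>) + x * (h * (h * s))"
    proof -
      have "real k * (h * \<alpha> * (1 + h * s)) = h * (real k * \<alpha>) + (real k * \<alpha>) * (h * (h * s))"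
        by (simp add: algebra_simps)
      also have "(real k * \<alpha>) * (h * (h * s)) \<le> x * (h * (h * s))"
        using kx hpos spos by (intro mult_right_mono) auto
      finally show ?thesis by simp
    qed
    have t3: "real k * (exp (h * (\<theta> * x)) * Fb s) \<le> x / \<alpha> * (exp (h * (\<theta> * x)) * Fb s)"
    proof (rule mult_right_mono)
      show "real k \<le> x / \<alpha>" using kx alpha_pos by (simp add: le_divide_eq)
    qed (simp add: Fb_nonneg)
    have e1: "h * \<gamma> * x = (\<kappa> + 2) * ln x"
    proof -
      have "h * \<gamma> * x = (lam * \<gamma>) * ln x" using x1' by (simp add: h_def field_simps)
      then show ?thesis by (simp only: lam(2))
    qed
    have e2: "x * (h * (h * s)) = lam^2"
      using x1' lnpos by (simp add: h_def s_def power2_eq_square field_simps)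
    have e3: "exp (h * (\<theta> * x)) = x powr ((a - 1) / 2)"
    proof -
      have "h * (\<theta> * x) = (lam * \<theta>) * ln x" using x1' by (simp add: h_def field_simps)
      then show ?thesis using x1' th by (simp add: powr_def)
    qed
    have e4: "x / \<alpha> * (exp (h * (\<theta> * x)) * Fb s) \<le> 1"
    proof -
      have "Fb s \<le> C * s powr (-a)" using C(3) sx0 by (simp add: s_def)
      then have "x / \<alpha> * (exp (h * (\<theta> * x)) * Fb s) \<le> x / \<alpha> * (exp (h * (\<theta> * x)) * (C * s powr (-a)))"
        using x1' alpha_pos by (intro mult_left_mono) auto
      also have "\<dots> = C / \<alpha> * (x powr (-(a-1)/2) * ln x powr (2*a))"
      proof -
        have l2: "(ln x)^2 = ln x powr 2" using lnpos by (simp add: powr_numeral)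
        have "s powr (-a) = x powr (-a) / ((ln x)^2) powr (-a)"
          unfolding s_def by (rule powr_divide)
        also have "((ln x)^2) powr (-a) = inverse (ln x powr (2*a))"
          unfolding l2 powr_powr by (simp add: powr_minus)
        finally have "s powr (-a) = x powr (-a) * ln x powr (2*a)" by (simp add: divide_inverse)
        moreover have "x * (x powr ((a - 1) / 2) * x powr (-a)) = x powr (-(a-1)/2)"
        proof -
          have "x powr (1 + (a - 1) / 2 + (-a)) = x powr 1 * x powr ((a - 1) / 2) * x powr (-a)"
            by (simp only: powr_add)
          then have "x * (x powr ((a - 1) / 2) * x powr (-a)) = x powr (1 + (a - 1) / 2 + (-a))"
            using x1' by (simp add: mult.assoc)
          also have "1 + (a - 1) / 2 + (-a) = -(a-1)/2" by (simp add: field_simps)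
          finally show ?thesis .
        qed
        ultimately show ?thesis unfolding e3
          by (simp only: mult.assoc mult.left_commute[of C] divide_inverse mult.commute[of _ "inverse \<alpha>"])
             (simp add: mult_ac)
      qed
      also have "\<dots> \<le> 1" by (rule small)
      finally show ?thesis .
    qed
    have "- h * z + real k * (h * \<alpha> * (1 + h * s) + exp (h * (\<theta> * x)) * Fb s)
        \<le> -((\<kappa> + 2) * ln x) + (lam^2 + 1)"
      using t1 t2 t3 e1 e2 e4 by (simp only: distrib_left)
    then have "exp (- h * z + real k * (h * \<alpha> * (1 + h * s) + exp (h * (\<theta> * x)) * Fb s))
        \<le> exp (-((\<kappa> + 2) * ln x) + (lam^2 + 1))" by simp
    also have "\<dots> = exp (lam^2 + 1) * exp ((-(\<kappa>+2)) * ln x)"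
      by (simp add: exp_add[symmetric] algebra_simps)
    also have "\<dots> = E x" using x1' by (simp add: E_def powr_def)
    finally show "prob {\<omega>\<in>space M. (\<Sum>i<k. min (real (Y i \<omega>)) (\<theta> * x)) \<ge> z} \<le> E x" using core by simp
    qed
  qed
  show ?thesis using th E0 Elim main by blast
qed


lemma distrY_borel:
  fixes f :: "nat \<Rightarrow> real"
  shows "distr M borel (\<lambda>\<omega>. f (Y i \<omega>)) = distr M borel (\<lambda>\<omega>. f (X \<omega>))"
proof -
  have "distr M borel (\<lambda>\<omega>. f (Y i \<omega>)) = distr (distr M (count_space UNIV) (Y i)) borel f"
    by (subst distr_distr) (auto simp: comp_def)
  also have "\<dots> = distr (distr M (count_space UNIV) X) borel f" by (simp add: distrY)
  also have "\<dots> = distr M borel (\<lambda>\<omega>. f (X \<omega>))"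
    by (subst distr_distr) (auto simp: comp_def)
  finally show ?thesis .
qed

lemma q_mono: "x \<le> y \<Longrightarrow> q k y \<le> q k x"
  unfolding q_def by (intro finite_measure_mono) auto

lemma q_lln:
  assumes "\<beta> < \<alpha>" "\<rho> > 0"
  shows "\<exists>K. \<forall>k\<ge>K. \<forall>x. x \<le> real k * \<beta> \<longrightarrow> q k x \<ge> 1 - \<rho>"
proof -
  have "\<forall>\<^sub>F T in sequentially. expectation (\<lambda>\<omega>. min (real (X \<omega>)) (real T)) > (\<alpha> + \<beta>) / 2 \<and> T \<ge> 1"
    using order_tendstoD(1)[OF Emin_tendsto, of "(\<alpha> + \<beta>) / 2"] assms eventually_ge_at_top[of 1]
    by (auto elim: eventually_conj)
  then obtain T where T: "expectation (\<lambda>\<omega>. min (real (X \<omega>)) (real T)) > (\<alpha> + \<beta>) / 2" "T \<ge> 1"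
    by (auto simp: eventually_sequentially)
  define \<mu> where "\<mu> = expectation (\<lambda>\<omega>. min (real (X \<omega>)) (real T))"
  define d where "d = \<mu> - \<beta>"
  have d: "d > 0" using T assms by (simp add: d_def \<mu>_def)
  have Tpos: "real T > 0" using T by simp
  have "((\<lambda>k. exp (-2 * (real k * d^2) / (real T)^2)) \<longlongrightarrow> 0) sequentially"
    using d Tpos by real_asymp
  then have "\<forall>\<^sub>F k in sequentially. exp (-2 * (real k * d^2) / (real T)^2) < \<rho>"
    using assms by (intro order_tendstoD(2)) auto
  then have "\<forall>\<^sub>F k in sequentially. exp (-2 * (real k * d^2) / (real T)^2) < \<rho> \<and> k \<ge> 1"
    using eventually_ge_at_top[of 1] by (rule eventually_conj)
  then obtain K where K: "\<And>k. k \<ge> K \<Longrightarrow> exp (-2 * (real k * d^2) / (real T)^2) < \<rho> \<and> k \<ge> 1"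
    by (auto simp: eventually_sequentially)
  show ?thesis
  proof (intro exI[of _ K] allI impI)
    fix k x assume k: "k \<ge> K" and x: "x \<le> real k * \<beta>"
    have k1: "k \<ge> 1" using K[OF k] by simp
    interpret H: Hoeffding_ineq_iid M "{..<k}" "\<lambda>i \<omega>. min (real (Y i \<omega>)) (real T)"
      "\<lambda>\<omega>. min (real (X \<omega>)) (real T)" 0 "real T" \<mu>
    proof unfold_locales
      show "indep_vars (\<lambda>_. borel) (\<lambda>i \<omega>. min (real (Y i \<omega>)) (real T)) {..<k}"
        by (rule indep_vars_compose2[OF indep_vars_subset[OF indepY]]) auto
      show "distr M borel (\<lambda>\<omega>. min (real (Y i \<omega>)) (real T)) = distr M borel (\<lambda>\<omega>. min (real (X \<omega>)) (real T))" for i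
        by (rule distrY_borel)
      show "AE x in M. min (real (X x)) (real T) \<in> {0..real T}" by auto
      show "\<mu> \<equiv> expectation (\<lambda>\<omega>. min (real (X \<omega>)) (real T))" by (simp add: \<mu>_def)
    qed auto
    have hoef: "prob {\<omega>\<in>space M. (\<Sum>i\<in>{..<k}. min (real (Y i \<omega>)) (real T)) \<le> real k * \<mu> - real k * d}
        \<le> exp (-2 * (real k * d)^2 / (real k * (real T - 0)^2))"
      using H.Hoeffding_ineq_le[of "real k * d"] d k1 T by (simp add: lessThan_empty_iff)
    also have "-2 * (real k * d)^2 / (real k * (real T - 0)^2) = -2 * (real k * d^2) / (real T)^2"
      using k1 by (simp add: power2_eq_square field_simps)
    also have "exp \<dots> < \<rho>" using K[OF k] by simp
    finally have hp: "prob {\<omega>\<in>space M. (\<Sum>i<k. min (real (Y i \<omega>)) (real T)) \<le> real k * \<beta>} < \<rho>"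
      by (simp add: d_def algebra_simps)
    have "{\<omega>\<in>space M. (\<Sum>i<k. min (real (Y i \<omega>)) (real T)) > real k * \<beta>}
        = space M - {\<omega>\<in>space M. (\<Sum>i<k. min (real (Y i \<omega>)) (real T)) \<le> real k * \<beta>}" by auto
    then have "prob {\<omega>\<in>space M. (\<Sum>i<k. min (real (Y i \<omega>)) (real T)) > real k * \<beta>} > 1 - \<rho>"
      using hp by (simp add: prob_compl)
    also have "prob {\<omega>\<in>space M. (\<Sum>i<k. min (real (Y i \<omega>)) (real T)) > real k * \<beta>} \<le> q k x"
      unfolding q_def
    proof (intro finite_measure_mono)
      show "{\<omega>\<in>space M. (\<Sum>i<k. min (real (Y i \<omega>)) (real T)) > real k * \<beta>} \<subseteq> {\<omega>\<in>space M. real (\<Sum>i<k. Y i \<omega>) > x}"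
      proof safe
        fix \<omega> assume "\<omega> \<in> space M" "(\<Sum>i<k. min (real (Y i \<omega>)) (real T)) > real k * \<beta>"
        moreover have "(\<Sum>i<k. min (real (Y i \<omega>)) (real T)) \<le> (\<Sum>i<k. real (Y i \<omega>))"
          by (intro sum_mono) auto
        ultimately show "real (\<Sum>i<k. Y i \<omega>) > x" using x by simp
      qed
    qed auto
    finally show "q k x \<ge> 1 - \<rho>" by simp
  qed
qed

lemma q_up:
  assumes \<eta>: "0 < \<eta>" "\<eta> < 1"
  shows "\<exists>\<theta>>0. \<exists>E. (\<forall>x. E x \<ge> 0) \<and> ((\<lambda>x. E x / Fb x) \<longlongrightarrow> 0) at_top \<and>
    (\<forall>\<^sub>F x in at_top. \<forall>k. real k * \<alpha> \<le> \<eta> * x / 2 \<longrightarrow>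
        q k x \<le> real k * Fb ((1 - \<eta>) * x) + (real k)^2 * Fb (\<theta> * x) ^ 2 + E x)"
proof -
  obtain \<theta> E where th: "\<theta> > 0" and E: "\<forall>x. E x \<ge> 0" "((\<lambda>x. E x / Fb x) \<longlongrightarrow> 0) at_top"
    and ev: "\<forall>\<^sub>F x in at_top. \<forall>k z. real k * \<alpha> \<le> x \<longrightarrow> real k * \<alpha> + \<eta>/2 * x \<le> z \<longrightarrow>
        prob {\<omega>\<in>space M. (\<Sum>i<k. min (real (Y i \<omega>)) (\<theta> * x)) \<ge> z} \<le> E x"
    using chernoff[of "\<eta>/2"] \<eta> by auto
  have "\<forall>\<^sub>F x in at_top. \<forall>k. real k * \<alpha> \<le> \<eta> * x / 2 \<longrightarrow>
        q k x \<le> real k * Fb ((1 - \<eta>) * x) + (real k)^2 * Fb (\<theta> * x) ^ 2 + E x"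
    using ev eventually_ge_at_top[of 0]
  proof eventually_elim
    case (elim x)
    show ?case
    proof (intro allI impI)
      fix k assume k: "real k * \<alpha> \<le> \<eta> * x / 2"
      define A where "A = {\<omega>\<in>space M. \<exists>i<k. real (Y i \<omega>) > (1 - \<eta>) * x}"
      define B where "B = {\<omega>\<in>space M. \<exists>i j. i < j \<and> j < k \<and> real (Y i \<omega>) > \<theta> * x \<and> real (Y j \<omega>) > \<theta> * x}"
      define C where "C = {\<omega>\<in>space M. (\<Sum>i<k. min (real (Y i \<omega>)) (\<theta> * x)) \<ge> \<eta> * x}"
      have sA: "A \<in> events" unfolding A_def by measurable
      have sB: "B \<in> events" unfolding B_def by measurable
      have sC: "C \<in> events" unfolding C_def by measurable
      have x0: "x \<ge> 0" using elim by simp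
      have incl: "{\<omega>\<in>space M. real (\<Sum>i<k. Y i \<omega>) > x} \<subseteq> A \<union> B \<union> C"
      proof
        fix \<omega> assume w: "\<omega> \<in> {\<omega>\<in>space M. real (\<Sum>i<k. Y i \<omega>) > x}"
        show "\<omega> \<in> A \<union> B \<union> C"
        proof (rule ccontr)
          assume "\<omega> \<notin> A \<union> B \<union> C"
          then have nA: "\<And>i. i < k \<Longrightarrow> real (Y i \<omega>) \<le> (1 - \<eta>) * x"
            and nB: "\<And>i j. i < j \<Longrightarrow> j < k \<Longrightarrow> \<not> (real (Y i \<omega>) > \<theta> * x \<and> real (Y j \<omega>) > \<theta> * x)"
            and nC: "(\<Sum>i<k. min (real (Y i \<omega>)) (\<theta> * x)) < \<eta> * x"
            using w by (auto simp: A_def B_def C_def not_le)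
          have S: "real (\<Sum>i<k. Y i \<omega>) = (\<Sum>i<k. real (Y i \<omega>))" by simp
          show False
          proof (cases "\<forall>i<k. real (Y i \<omega>) \<le> \<theta> * x")
            case True
            then have "(\<Sum>i<k. min (real (Y i \<omega>)) (\<theta> * x)) = (\<Sum>i<k. real (Y i \<omega>))"
              by (intro sum.cong) auto
            moreover have "\<eta> * x \<le> x" using \<eta> x0 by (intro mult_left_le_one_le) auto
            moreover have "real (\<Sum>i<k. Y i \<omega>) > x" using w by simp
            ultimately show False using nC S by linarith
          next
            case False
            then obtain i0 where i0: "i0 < k" "real (Y i0 \<omega>) > \<theta> * x" by auto
            have others: "real (Y j \<omega>) \<le> \<theta> * x" if "j < k" "j \<noteq> i0" for j
            proof (cases "j < i0")
              case True then show ?thesis using nB[of j i0] i0 by auto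
            next
              case False then have "i0 < j" using that by simp
              then show ?thesis using nB[of i0 j] i0 that by auto
            qed
            have "(\<Sum>i<k. min (real (Y i \<omega>)) (\<theta> * x)) = min (real (Y i0 \<omega>)) (\<theta> * x) + (\<Sum>i\<in>{..<k}-{i0}. min (real (Y i \<omega>)) (\<theta> * x))"
              using i0 by (intro sum.remove) auto
            also have "(\<Sum>i\<in>{..<k}-{i0}. min (real (Y i \<omega>)) (\<theta> * x)) = (\<Sum>i\<in>{..<k}-{i0}. real (Y i \<omega>))"
              using others by (intro sum.cong) auto
            also have "(\<Sum>i\<in>{..<k}-{i0}. real (Y i \<omega>)) = (\<Sum>i<k. real (Y i \<omega>)) - real (Y i0 \<omega>)"
              using sum.remove[of "{..<k}" i0 "\<lambda>i. real (Y i \<omega>)"] i0 by simp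
            finally have eq: "(\<Sum>i<k. min (real (Y i \<omega>)) (\<theta> * x)) = min (real (Y i0 \<omega>)) (\<theta> * x) + ((\<Sum>i<k. real (Y i \<omega>)) - real (Y i0 \<omega>))" .
            have "min (real (Y i0 \<omega>)) (\<theta> * x) \<ge> 0" using th x0 by simp
            moreover have "real (Y i0 \<omega>) \<le> (1 - \<eta>) * x" using nA i0 by simp
            moreover have "real (\<Sum>i<k. Y i \<omega>) > x" using w by simp
            moreover have "(1 - \<eta>) * x = x - \<eta> * x" by (simp add: algebra_simps)
            ultimately show False using eq nC S by linarith
          qed
        qed
      qed
      have "q k x \<le> prob (A \<union> B \<union> C)"
        unfolding q_def using sA sB sC incl by (intro finite_measure_mono) auto
      also have "\<dots> \<le> prob A + prob B + prob C"
        using measure_Un_le[OF _ sC, of "A \<union> B"] measure_Un_le[OF sA sB] sA sB by auto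
      also have "prob A \<le> real k * Fb ((1 - \<eta>) * x)" unfolding A_def by (rule union_bound)
      also have "prob B \<le> (real k)^2 * Fb (\<theta> * x) ^ 2" unfolding B_def by (rule pair_bound)
      also have "prob C \<le> E x"
      proof -
        have "\<eta> * x \<le> x" using \<eta> x0 by (intro mult_left_le_one_le) auto
        then have "real k * \<alpha> \<le> x" using k x0 by linarith
        moreover have "real k * \<alpha> + \<eta>/2 * x \<le> \<eta> * x" using k by simp
        ultimately show ?thesis using elim unfolding C_def by blast
      qed
      finally show "q k x \<le> real k * Fb ((1 - \<eta>) * x) + (real k)^2 * Fb (\<theta> * x) ^ 2 + E x" by simp
    qed
  qed
  then show ?thesis using th E by blast
qed

lemma q_up2:
  assumes \<epsilon>: "0 < \<epsilon>" "\<epsilon> < 1"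
  shows "\<exists>\<theta>>0. \<exists>E. (\<forall>x. E x \<ge> 0) \<and> ((\<lambda>x. E x / Fb x) \<longlongrightarrow> 0) at_top \<and>
    (\<forall>\<^sub>F x in at_top. \<forall>k. real k * \<alpha> \<le> (1 - \<epsilon>) * x \<longrightarrow> q k x \<le> real k * Fb (\<theta> * x) + E x)"
proof -
  obtain \<theta> E where th: "\<theta> > 0" and E: "\<forall>x. E x \<ge> 0" "((\<lambda>x. E x / Fb x) \<longlongrightarrow> 0) at_top"
    and ev: "\<forall>\<^sub>F x in at_top. \<forall>k z. real k * \<alpha> \<le> x \<longrightarrow> real k * \<alpha> + \<epsilon> * x \<le> z \<longrightarrow>
        prob {\<omega>\<in>space M. (\<Sum>i<k. min (real (Y i \<omega>)) (\<theta> * x)) \<ge> z} \<le> E x"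
    using chernoff[of \<epsilon>] \<epsilon> by auto
  have "\<forall>\<^sub>F x in at_top. \<forall>k. real k * \<alpha> \<le> (1 - \<epsilon>) * x \<longrightarrow> q k x \<le> real k * Fb (\<theta> * x) + E x"
    using ev eventually_ge_at_top[of 0]
  proof eventually_elim
    case (elim x)
    show ?case
    proof (intro allI impI)
      fix k assume k: "real k * \<alpha> \<le> (1 - \<epsilon>) * x"
      define A where "A = {\<omega>\<in>space M. \<exists>i<k. real (Y i \<omega>) > \<theta> * x}"
      define C where "C = {\<omega>\<in>space M. (\<Sum>i<k. min (real (Y i \<omega>)) (\<theta> * x)) \<ge> x}"
      have sA: "A \<in> events" unfolding A_def by measurable
      have sC: "C \<in> events" unfolding C_def by measurable
      have x0: "x \<ge> 0" using elim by simp
      have incl: "{\<omega>\<in>space M. real (\<Sum>i<k. Y i \<omega>) > x} \<subseteq> A \<union> C"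
      proof
        fix \<omega> assume w: "\<omega> \<in> {\<omega>\<in>space M. real (\<Sum>i<k. Y i \<omega>) > x}"
        show "\<omega> \<in> A \<union> C"
        proof (rule ccontr)
          assume "\<omega> \<notin> A \<union> C"
          then have nA: "\<And>i. i < k \<Longrightarrow> real (Y i \<omega>) \<le> \<theta> * x"
            and nC: "(\<Sum>i<k. min (real (Y i \<omega>)) (\<theta> * x)) < x"
            using w by (auto simp: A_def C_def not_le)
          have "(\<Sum>i<k. min (real (Y i \<omega>)) (\<theta> * x)) = (\<Sum>i<k. real (Y i \<omega>))"
            using nA by (intro sum.cong) auto
          then show False using w nC by simp
        qed
      qed
      have "q k x \<le> prob (A \<union> C)"
        unfolding q_def using sA sC incl by (intro finite_measure_mono) auto
      also have "\<dots> \<le> prob A + prob C"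
        using measure_Un_le[OF sA sC] by auto
      also have "prob A \<le> real k * Fb (\<theta> * x)" unfolding A_def by (rule union_bound)
      also have "prob C \<le> E x"
      proof -
        have "(1 - \<epsilon>) * x \<le> x" using \<epsilon> x0 by (intro mult_left_le_one_le) auto
        then have "real k * \<alpha> \<le> x" using k by linarith
        moreover have "real k * \<alpha> + \<epsilon> * x \<le> x" using k by (simp add: algebra_simps)
        ultimately show ?thesis using elim unfolding C_def by blast
      qed
      finally show "q k x \<le> real k * Fb (\<theta> * x) + E x" by simp
    qed
  qed
  then show ?thesis using th E by blast
qed

end

lemma choose_small_lt:
  fixes f :: "real \<Rightarrow> real"
  assumes "(f \<longlongrightarrow> l) (at_right 0)" "l < b"
  shows "\<exists>\<eta>. 0 < \<eta> \<and> \<eta> < 1 \<and> f \<eta> < b"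
proof -
  have "\<forall>\<^sub>F y in at_right 0. f y < b" using assms by (intro order_tendstoD(2))
  then obtain b' where b': "b' > 0" "\<And>y. y > 0 \<Longrightarrow> y < b' \<Longrightarrow> f y < b"
    unfolding eventually_at_right_field by auto
  show ?thesis using b' by (intro exI[of _ "min (b'/2) (1/2)"]) auto
qed

lemma choose_small_gt:
  fixes f :: "real \<Rightarrow> real"
  assumes "(f \<longlongrightarrow> l) (at_right 0)" "b < l"
  shows "\<exists>\<eta>. 0 < \<eta> \<and> \<eta> < 1 \<and> b < f \<eta>"
proof -
  have "\<forall>\<^sub>F y in at_right 0. b < f y" using assms by (intro order_tendstoD(1))
  then obtain b' where b': "b' > 0" "\<And>y. y > 0 \<Longrightarrow> y < b' \<Longrightarrow> b < f y"
    unfolding eventually_at_right_field by auto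
  show ?thesis using b' by (intro exI[of _ "min (b'/2) (1/2)"]) auto
qed

lemma lin_at_top: "t > 0 \<Longrightarrow> filterlim (\<lambda>x::real. t * x) at_top at_top"
  by (rule filterlim_tendsto_pos_mult_at_top[OF tendsto_const]) (auto simp: filterlim_ident)

locale rsum = rvs +
  fixes p :: "nat \<Rightarrow> real" and m :: real
  assumes p0: "\<And>k. 0 \<le> p k" and psum: "p sums 1" and pm: "(\<lambda>k. real k * p k) sums m"
begin

definition Tl where "Tl y = (\<Sum>k. if real k > y then p k else 0)"
definition TM where "TM y = (\<Sum>k. if real k > y then real k * p k else 0)"

lemma Tl_sums: "(\<lambda>k. if real k > y then p k else 0) sums Tl y"
proof -
  have "summable (\<lambda>k. if real k > y then p k else 0)"
    by (rule summable_comparison_test[OF _ sums_summable[OF psum]]) (use p0 in auto)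
  then show ?thesis unfolding Tl_def by (rule summable_sums)
qed

lemma TM_sums: "(\<lambda>k. if real k > y then real k * p k else 0) sums TM y"
proof -
  have "summable (\<lambda>k. if real k > y then real k * p k else 0)"
    by (rule summable_comparison_test[OF _ sums_summable[OF pm]]) (use p0 in auto)
  then show ?thesis unfolding TM_def by (rule summable_sums)
qed

lemma TMc_sums: "(\<lambda>k. if real k \<le> y then real k * p k else 0) sums (m - TM y)"
proof -
  have "(\<lambda>k. real k * p k - (if real k > y then real k * p k else 0)) sums (m - TM y)"
    by (rule sums_diff[OF pm TM_sums])
  moreover have "(\<lambda>k. real k * p k - (if real k > y then real k * p k else 0)) = (\<lambda>k. if real k \<le> y then real k * p k else 0)"
    by (auto simp: fun_eq_iff)
  ultimately show ?thesis by simp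
qed

lemma Tl_nonneg: "0 \<le> Tl y"
  unfolding Tl_def by (rule suminf_nonneg[OF sums_summable[OF Tl_sums]]) (use p0 in auto)

lemma TM_nonneg: "0 \<le> TM y"
  unfolding TM_def by (rule suminf_nonneg[OF sums_summable[OF TM_sums]]) (use p0 in auto)

lemma TM_lim: "(TM \<longlongrightarrow> 0) at_top"
proof (rule order_tendstoI)
  fix a :: real assume "a < 0" then show "\<forall>\<^sub>F y in at_top. a < TM y"
    using TM_nonneg by (auto intro!: always_eventually simp: less_le_trans)
next
  fix e :: real assume e: "0 < e"
  have "(\<lambda>n. \<Sum>k<n. real k * p k) \<longlonglongrightarrow> m" using pm by (simp add: sums_def)
  then have "\<forall>\<^sub>F n in sequentially. m - e < (\<Sum>k<n. real k * p k)"
    using e by (intro order_tendstoD(1)) auto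
  then obtain N where N: "\<And>n. n \<ge> N \<Longrightarrow> m - e < (\<Sum>k<n. real k * p k)"
    by (auto simp: eventually_sequentially)
  show "\<forall>\<^sub>F y in at_top. TM y < e"
    using eventually_ge_at_top[of "real N"]
  proof eventually_elim
    case (elim y)
    have "(\<Sum>k<N. real k * p k) = (\<Sum>k<N. if real k \<le> y then real k * p k else 0)"
      using elim by (intro sum.cong) auto
    also have "\<dots> \<le> m - TM y"
      unfolding sums_unique[OF TMc_sums]
      by (rule sum_le_suminf[OF sums_summable[OF TMc_sums]]) (use p0 in auto)
    finally show ?case using N[of N] by simp
  qed
qed


lemma tail_scaled:
  assumes tail: "((\<lambda>y. Tl y / Fb y) \<longlongrightarrow> c) at_top" and t: "t > 0"
  shows "((\<lambda>x. Tl (t*x) / Fb x) \<longlongrightarrow> c * t powr (-\<kappa>)) at_top"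
proof -
  have l1: "((\<lambda>x. Tl (t*x) / Fb (t*x)) \<longlongrightarrow> c) at_top"
    using filterlim_compose[OF tail lin_at_top[OF t]] by simp
  have "((\<lambda>x. Tl (t*x) / Fb (t*x) * (Fb (t*x) / Fb x)) \<longlongrightarrow> c * t powr (-\<kappa>)) at_top"
    by (rule tendsto_mult[OF l1 Fb_ratio[OF t]])
  moreover have "\<forall>\<^sub>F x in at_top. Tl (t*x) / Fb (t*x) * (Fb (t*x) / Fb x) = Tl (t*x) / Fb x"
  proof -
    have "\<forall>\<^sub>F x in at_top. Fb (t*x) > 0"
      using lin_at_top[OF t] Fb_pos_ev unfolding filterlim_iff by blast
    then show ?thesis by eventually_elim simp
  qed
  ultimately show ?thesis by (rule Lim_transform_eventually)
qed

end

locale rsumq = rsum +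
  fixes q :: "nat \<Rightarrow> real \<Rightarrow> real" and c :: real
  assumes tail: "((\<lambda>y. Tl y / Fb y) \<longlongrightarrow> c) at_top"
    and q0: "\<And>k x. 0 \<le> q k x" and q1: "\<And>k x. q k x \<le> 1"
    and low1: "\<And>k x. q k x \<ge> real k * Fb x - (real k)^2 * Fb x ^ 2"
    and lln: "\<And>\<beta> \<rho>. \<beta> < \<alpha> \<Longrightarrow> \<rho> > 0 \<Longrightarrow> \<exists>K. \<forall>k\<ge>K. \<forall>x. x \<le> real k * \<beta> \<longrightarrow> q k x \<ge> 1 - \<rho>"
    and up: "\<And>\<eta>. 0 < \<eta> \<Longrightarrow> \<eta> < 1 \<Longrightarrow> \<exists>\<theta>>0. \<exists>E. (\<forall>x. E x \<ge> 0) \<and> ((\<lambda>x. E x / Fb x) \<longlongrightarrow> 0) at_top \<and>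
      (\<forall>\<^sub>F x in at_top. \<forall>k. real k * \<alpha> \<le> \<eta> * x / 2 \<longrightarrow>
        q k x \<le> real k * Fb ((1 - \<eta>) * x) + (real k)^2 * Fb (\<theta> * x) ^ 2 + E x)"
    and up2: "\<And>\<epsilon>. 0 < \<epsilon> \<Longrightarrow> \<epsilon> < 1 \<Longrightarrow> \<exists>\<theta>>0. \<exists>E. (\<forall>x. E x \<ge> 0) \<and> ((\<lambda>x. E x / Fb x) \<longlongrightarrow> 0) at_top \<and>
      (\<forall>\<^sub>F x in at_top. \<forall>k. real k * \<alpha> \<le> (1 - \<epsilon>) * x \<longrightarrow> q k x \<le> real k * Fb (\<theta> * x) + E x)"
begin

lemma pq_summable: "summable (\<lambda>k. p k * q k x)"
  by (rule summable_comparison_test[OF _ sums_summable[OF psum]])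
     (use p0 q0 q1 in \<open>auto intro!: mult_right_le_one_le simp: abs_mult\<close>)

lemma c_nonneg: "c \<ge> 0"
  by (rule tendsto_lowerbound[OF tail]) (auto intro!: always_eventually divide_nonneg_nonneg Tl_nonneg Fb_nonneg)

lemma upper:
  assumes b: "b > m + c * \<alpha> powr \<kappa>"
  shows "\<forall>\<^sub>F x in at_top. (\<Sum>k. p k * q k x) / Fb x < b"
proof -
  define e where "e = b - (m + c * \<alpha> powr \<kappa>)"
  have e: "e > 0" using b by (simp add: e_def)
  have "((\<lambda>\<eta>. m * (1 - \<eta>) powr (-\<kappa>)) \<longlongrightarrow> m * (1 - 0) powr (-\<kappa>)) (at_right 0)"
    by (intro tendsto_intros) auto
  then obtain \<eta> where eta: "0 < \<eta>" "\<eta> < 1" "m * (1 - \<eta>) powr (-\<kappa>) < m + e/2"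
    using choose_small_lt[of _ m "m + e/2"] e by auto
  have apk: "(1 / \<alpha>) powr (-\<kappa>) = \<alpha> powr \<kappa>"
    using alpha_pos by (simp add: powr_minus powr_divide)
  have "((\<lambda>\<epsilon>. c * ((1 - \<epsilon>) / \<alpha>) powr (-\<kappa>)) \<longlongrightarrow> c * ((1 - 0) / \<alpha>) powr (-\<kappa>)) (at_right 0)"
    using alpha_pos by (intro tendsto_intros) auto
  then obtain \<epsilon> where eps: "0 < \<epsilon>" "\<epsilon> < 1" "c * ((1 - \<epsilon>) / \<alpha>) powr (-\<kappa>) < c * \<alpha> powr \<kappa> + e/2"
    using choose_small_lt[of _ "c * \<alpha> powr \<kappa>" "c * \<alpha> powr \<kappa> + e/2"] e apk by auto
  obtain \<theta> E where th: "\<theta> > 0" and E: "\<forall>x. E x \<ge> 0" "((\<lambda>x. E x / Fb x) \<longlongrightarrow> 0) at_top"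
    and evU: "\<forall>\<^sub>F x in at_top. \<forall>k. real k * \<alpha> \<le> \<eta> * x / 2 \<longrightarrow>
        q k x \<le> real k * Fb ((1 - \<eta>) * x) + (real k)^2 * Fb (\<theta> * x) ^ 2 + E x"
    using up[OF eta(1,2)] by auto
  obtain \<theta>' E' where th': "\<theta>' > 0" and E': "\<forall>x. E' x \<ge> 0" "((\<lambda>x. E' x / Fb x) \<longlongrightarrow> 0) at_top"
    and evU2: "\<forall>\<^sub>F x in at_top. \<forall>k. real k * \<alpha> \<le> (1 - \<epsilon>) * x \<longrightarrow> q k x \<le> real k * Fb (\<theta>' * x) + E' x"
    using up2[OF eps(1,2)] by auto
  define \<delta> where "\<delta> = \<eta> / (2 * \<alpha>)"
  define t where "t = (1 - \<epsilon>) / \<alpha>"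
  have dpos: "\<delta> > 0" and tpos: "t > 0" using eta eps alpha_pos by (auto simp: \<delta>_def t_def)
  define G where "G x = m * Fb ((1 - \<eta>) * x) + m * \<delta> * (x * Fb (\<theta> * x) ^ 2) + E x
      + TM (\<delta> * x) * Fb (\<theta>' * x) + E' x + Tl (t * x)" for x
  have Gdiv: "G x / Fb x = m * (Fb ((1 - \<eta>) * x) / Fb x) + m * \<delta> / \<theta> * ((\<theta> * x) * Fb (\<theta> * x) * (Fb (\<theta> * x) / Fb x))
      + E x / Fb x + TM (\<delta> * x) * (Fb (\<theta>' * x) / Fb x) + E' x / Fb x + Tl (t * x) / Fb x" for x
    using th by (simp add: G_def add_divide_distrib power2_eq_square)
  have Glim: "((\<lambda>x. G x / Fb x) \<longlongrightarrow> m * (1 - \<eta>) powr (-\<kappa>) + m * \<delta> / \<theta> * (0 * \<theta> powr (-\<kappa>))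
      + 0 + 0 * \<theta>' powr (-\<kappa>) + 0 + c * t powr (-\<kappa>)) at_top"
    unfolding Gdiv
  proof (intro tendsto_add tendsto_mult tendsto_const)
    show "((\<lambda>x. Fb ((1 - \<eta>) * x) / Fb x) \<longlongrightarrow> (1 - \<eta>) powr (-\<kappa>)) at_top"
      using eta by (intro Fb_ratio) auto
    show "((\<lambda>x. \<theta> * x * Fb (\<theta> * x)) \<longlongrightarrow> 0) at_top"
      using filterlim_compose[OF xFb_lim lin_at_top[OF th]] by simp
    show "((\<lambda>x. Fb (\<theta> * x) / Fb x) \<longlongrightarrow> \<theta> powr (-\<kappa>)) at_top" using th by (rule Fb_ratio)
    show "((\<lambda>x. E x / Fb x) \<longlongrightarrow> 0) at_top" by (rule E(2))
    show "((\<lambda>x. TM (\<delta> * x)) \<longlongrightarrow> 0) at_top"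
      using filterlim_compose[OF TM_lim lin_at_top[OF dpos]] by simp
    show "((\<lambda>x. Fb (\<theta>' * x) / Fb x) \<longlongrightarrow> \<theta>' powr (-\<kappa>)) at_top" using th' by (rule Fb_ratio)
    show "((\<lambda>x. E' x / Fb x) \<longlongrightarrow> 0) at_top" by (rule E'(2))
    show "((\<lambda>x. Tl (t * x) / Fb x) \<longlongrightarrow> c * t powr (-\<kappa>)) at_top" by (rule tail_scaled[OF tail tpos])
  qed
  have "m * (1 - \<eta>) powr (-\<kappa>) + m * \<delta> / \<theta> * (0 * \<theta> powr (-\<kappa>)) + 0 + 0 * \<theta>' powr (-\<kappa>) + 0 + c * t powr (-\<kappa>) < b"
  proof -
    have "m * (1 - \<eta>) powr (-\<kappa>) + m * \<delta> / \<theta> * (0 * \<theta> powr (-\<kappa>)) + 0 + 0 * \<theta>' powr (-\<kappa>) + 0 + c * t powr (-\<kappa>)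
       = m * (1 - \<eta>) powr (-\<kappa>) + c * ((1 - \<epsilon>) / \<alpha>) powr (-\<kappa>)" by (simp add: t_def)
    moreover have "m * (1 - \<eta>) powr (-\<kappa>) + c * ((1 - \<epsilon>) / \<alpha>) powr (-\<kappa>) < b"
      using add_strict_mono[OF eta(3) eps(3)] by (simp add: e_def)
    ultimately show ?thesis unfolding t_def by simp
  qed
  then have evG: "\<forall>\<^sub>F x in at_top. G x / Fb x < b" using Glim by (intro order_tendstoD(2))
  have evS: "\<forall>\<^sub>F x in at_top. (\<Sum>k. p k * q k x) \<le> G x"
    using evU evU2 eventually_gt_at_top[of 0]
  proof eventually_elim
    case (elim x)
    have x0: "x > 0" using elim by simp
    define g where "g k = real k * Fb ((1 - \<eta>) * x) + real k * (\<delta> * x) * Fb (\<theta> * x) ^ 2 + E x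
      + (if real k > \<delta> * x then real k * Fb (\<theta>' * x) else 0) + E' x + (if real k > t * x then 1 else 0)" for k
    have pg: "(\<lambda>k. p k * g k) = (\<lambda>k. (real k * p k) * Fb ((1 - \<eta>) * x) + (real k * p k) * (\<delta> * x * Fb (\<theta> * x) ^ 2)
        + p k * E x + (if real k > \<delta> * x then real k * p k else 0) * Fb (\<theta>' * x) + p k * E' x
        + (if real k > t * x then p k else 0))"
      by (auto simp: fun_eq_iff g_def algebra_simps)
    have gs: "(\<lambda>k. p k * g k) sums (m * Fb ((1 - \<eta>) * x) + m * (\<delta> * x * Fb (\<theta> * x) ^ 2) + 1 * E x
        + TM (\<delta> * x) * Fb (\<theta>' * x) + 1 * E' x + Tl (t * x))"
      unfolding pg
      by (intro sums_add sums_mult2 pm psum TM_sums Tl_sums)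
    have Gx: "G x = m * Fb ((1 - \<eta>) * x) + m * (\<delta> * x * Fb (\<theta> * x) ^ 2) + 1 * E x
        + TM (\<delta> * x) * Fb (\<theta>' * x) + 1 * E' x + Tl (t * x)"
      by (simp add: G_def algebra_simps)
    have qg: "q k x \<le> g k" for k
    proof -
      have nn1: "0 \<le> real k * Fb ((1 - \<eta>) * x)" by (simp add: Fb_nonneg)
      have nn2: "0 \<le> real k * (\<delta> * x) * Fb (\<theta> * x) ^ 2" using dpos x0 by simp
      have nn4: "0 \<le> (if real k > \<delta> * x then real k * Fb (\<theta>' * x) else 0)" by (simp add: Fb_nonneg)
      have nn6: "0 \<le> (if real k > t * x then 1 else 0 :: real)" by simp
      have nnE: "0 \<le> E x" "0 \<le> E' x" using E E' by auto
      show ?thesis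
      proof (cases "real k \<le> \<delta> * x")
        case True
        have "real k * \<alpha> \<le> \<delta> * x * \<alpha>" using True alpha_pos by (intro mult_right_mono) auto
        also have "\<delta> * x * \<alpha> = \<eta> * x / 2" using alpha_pos by (simp add: \<delta>_def field_simps)
        finally have "q k x \<le> real k * Fb ((1 - \<eta>) * x) + (real k)^2 * Fb (\<theta> * x) ^ 2 + E x"
          using elim by blast
        moreover have "(real k)^2 * Fb (\<theta> * x) ^ 2 \<le> real k * (\<delta> * x) * Fb (\<theta> * x) ^ 2"
          using True by (intro mult_right_mono) (auto simp: power2_eq_square intro!: mult_left_mono)
        ultimately show ?thesis using nn4 nn6 nnE unfolding g_def by linarith
      next
        case False
        show ?thesis
        proof (cases "real k \<le> t * x")
          case True
          have "real k * \<alpha> \<le> t * x * \<alpha>" using True alpha_pos by (intro mult_right_mono) auto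
          also have "t * x * \<alpha> = (1 - \<epsilon>) * x" using alpha_pos by (simp add: t_def field_simps)
          finally have "q k x \<le> real k * Fb (\<theta>' * x) + E' x" using elim by blast
          then show ?thesis using False nn1 nn2 nn6 nnE unfolding g_def by auto
        next
          case False2: False
          then have "(if real k > t * x then 1 else 0 :: real) = 1" by simp
          moreover have "(if real k > \<delta> * x then real k * Fb (\<theta>' * x) else 0) \<ge> 0" by (simp add: Fb_nonneg)
          ultimately show ?thesis using q1[of k x] nn1 nn2 nnE unfolding g_def by linarith
        qed
      qed
    qed
    have "(\<Sum>k. p k * q k x) \<le> (\<Sum>k. p k * g k)"
      by (rule suminf_le[OF _ pq_summable sums_summable[OF gs]]) (use p0 qg in \<open>auto intro: mult_left_mono\<close>)
    also have "\<dots> = G x" using sums_unique[OF gs] Gx by simp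
    finally show ?case .
  qed
  show ?thesis using evG evS Fb_pos_ev
  proof eventually_elim
    case (elim x)
    have "(\<Sum>k. p k * q k x) / Fb x \<le> G x / Fb x" using elim by (intro divide_right_mono) auto
    then show ?case using elim by simp
  qed
qed


lemma lower:
  assumes a: "a < m + c * \<alpha> powr \<kappa>"
  shows "\<forall>\<^sub>F x in at_top. a < (\<Sum>k. p k * q k x) / Fb x"
proof -
  define e where "e = m + c * \<alpha> powr \<kappa> - a"
  have e: "e > 0" using a by (simp add: e_def)
  have apk: "(1 / \<alpha>) powr (-\<kappa>) = \<alpha> powr \<kappa>"
    using alpha_pos by (simp add: powr_minus powr_divide)
  have "((\<lambda>\<epsilon>. c * ((1 + \<epsilon>) / \<alpha>) powr (-\<kappa>)) \<longlongrightarrow> c * ((1 + 0) / \<alpha>) powr (-\<kappa>)) (at_right 0)"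
    using alpha_pos by (intro tendsto_intros) auto
  then obtain \<epsilon> where eps: "0 < \<epsilon>" "\<epsilon> < 1" "c * \<alpha> powr \<kappa> - e/4 < c * ((1 + \<epsilon>) / \<alpha>) powr (-\<kappa>)"
    using choose_small_gt[of _ "c * \<alpha> powr \<kappa>" "c * \<alpha> powr \<kappa> - e/4"] e apk by auto
  define A where "A = c * ((1 + \<epsilon>) / \<alpha>) powr (-\<kappa>)"
  have A0: "A \<ge> 0" using c_nonneg by (simp add: A_def)
  define \<rho> where "\<rho> = min (1/2) (e / (4 * (A + 1)))"
  have "e / (4 * (A + 1)) > 0" using e A0 by simp
  then have rho: "\<rho> > 0" "\<rho> \<le> 1/2" unfolding \<rho>_def by (simp_all add: min_def)
  have rhoA: "\<rho> * A \<le> e / 4"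
  proof -
    have "\<rho> * A \<le> e / (4 * (A + 1)) * A" using A0 by (intro mult_right_mono) (auto simp: \<rho>_def)
    also have "\<dots> = e / 4 * (A / (A + 1))" by (simp add: field_simps)
    also have "\<dots> \<le> e / 4 * 1" using e A0 by (intro mult_left_mono) auto
    finally show ?thesis by simp
  qed
  define \<beta> where "\<beta> = \<alpha> / (1 + \<epsilon>)"
  have beta: "\<beta> < \<alpha>" using alpha_pos eps by (simp add: \<beta>_def field_simps)
  obtain K where K: "\<And>k x. k \<ge> K \<Longrightarrow> x \<le> real k * \<beta> \<Longrightarrow> q k x \<ge> 1 - \<rho>"
    using lln[OF beta rho(1)] by blast
  define u where "u = (1 + \<epsilon>) / \<alpha>"
  have upos: "u > 0" using eps alpha_pos by (simp add: u_def)
  define H where "H x = (Fb x - u * x * Fb x ^ 2) * (m - TM (u * x)) + (1 - \<rho>) * Tl (u * x)" for x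
  have Hdiv: "\<forall>\<^sub>F x in at_top. H x / Fb x = (1 - u * (x * Fb x)) * (m - TM (u * x)) + (1 - \<rho>) * (Tl (u * x) / Fb x)"
    using Fb_pos_ev by eventually_elim (simp add: H_def field_simps power2_eq_square)
  have Hlim: "((\<lambda>x. (1 - u * (x * Fb x)) * (m - TM (u * x)) + (1 - \<rho>) * (Tl (u * x) / Fb x))
      \<longlongrightarrow> (1 - u * 0) * (m - 0) + (1 - \<rho>) * (c * u powr (-\<kappa>))) at_top"
  proof (intro tendsto_intros)
    show "((\<lambda>x. x * Fb x) \<longlongrightarrow> 0) at_top" by (rule xFb_lim)
    show "((\<lambda>x. TM (u * x)) \<longlongrightarrow> 0) at_top"
      using filterlim_compose[OF TM_lim lin_at_top[OF upos]] by simp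
    show "((\<lambda>x. Tl (u * x) / Fb x) \<longlongrightarrow> c * u powr (-\<kappa>)) at_top" by (rule tail_scaled[OF tail upos])
  qed
  have "a < (1 - u * 0) * (m - 0) + (1 - \<rho>) * (c * u powr (-\<kappa>))"
  proof -
    have G: "(1 - u * 0) * (m - 0) + (1 - \<rho>) * (c * u powr (-\<kappa>)) = m + A - \<rho> * A"
      by (simp add: A_def u_def algebra_simps)
    have eA: "c * \<alpha> powr \<kappa> - e/4 < A" using eps(3) by (simp add: A_def)
    have "a < m + A - \<rho> * A" using eA rhoA e_def e by linarith
    then show ?thesis using G by simp
  qed
  then have evH: "\<forall>\<^sub>F x in at_top. a < H x / Fb x"
    using Lim_transform_eventually[OF Hlim eventually_mono[OF Hdiv]] by (intro order_tendstoD(1)) auto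
  have evS: "\<forall>\<^sub>F x in at_top. H x \<le> (\<Sum>k. p k * q k x)"
    using eventually_gt_at_top[of 0] eventually_ge_at_top[of "real K / u"]
  proof eventually_elim
    case (elim x)
    have x0: "x > 0" using elim by simp
    have uxK: "u * x \<ge> real K" using elim upos by (simp add: field_simps)
    define h where "h k = (if real k \<le> u * x then real k * (Fb x - u * x * Fb x ^ 2) else 0)
       + (if real k > u * x then 1 - \<rho> else 0)" for k
    have ph: "(\<lambda>k. p k * h k) = (\<lambda>k. (if real k \<le> u * x then real k * p k else 0) * (Fb x - u * x * Fb x ^ 2)
        + (if real k > u * x then p k else 0) * (1 - \<rho>))"
      by (auto simp: fun_eq_iff h_def algebra_simps)
    have hs: "(\<lambda>k. p k * h k) sums ((m - TM (u * x)) * (Fb x - u * x * Fb x ^ 2) + Tl (u * x) * (1 - \<rho>))"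
      unfolding ph by (intro sums_add sums_mult2 TMc_sums Tl_sums)
    have hq: "h k \<le> q k x" for k
    proof (cases "real k \<le> u * x")
      case True
      have "(real k)^2 * Fb x ^ 2 \<le> real k * (u * x) * Fb x ^ 2"
        using True by (intro mult_right_mono) (auto simp: power2_eq_square intro!: mult_left_mono)
      then have "real k * (Fb x - u * x * Fb x ^ 2) \<le> real k * Fb x - (real k)^2 * Fb x ^ 2"
        by (simp add: algebra_simps)
      then show ?thesis using True low1[of k x] by (simp add: h_def)
    next
      case False
      then have kK: "k \<ge> K" using uxK by simp
      have "x * (1 + \<epsilon>) = u * x * \<alpha>" using alpha_pos by (simp add: u_def field_simps)
      also have "\<dots> \<le> real k * \<alpha>" using False alpha_pos by (intro mult_right_mono) auto
      finally have "x \<le> real k * \<beta>" using eps by (simp add: \<beta>_def field_simps)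
      then show ?thesis using K[OF kK] False by (simp add: h_def)
    qed
    have "H x = (\<Sum>k. p k * h k)"
      using sums_unique[OF hs] by (simp add: H_def algebra_simps)
    also have "\<dots> \<le> (\<Sum>k. p k * q k x)"
      by (rule suminf_le[OF _ sums_summable[OF hs] pq_summable]) (use p0 hq in \<open>auto intro: mult_left_mono\<close>)
    finally show ?case .
  qed
  show ?thesis using evH evS Fb_pos_ev
  proof eventually_elim
    case (elim x)
    have "H x / Fb x \<le> (\<Sum>k. p k * q k x) / Fb x" using elim by (intro divide_right_mono) auto
    then show ?case using elim by simp
  qed
qed

theorem random_sum_asymp:
  "((\<lambda>x. (\<Sum>k. p k * q k x) / Fb x) \<longlongrightarrow> m + c * \<alpha> powr \<kappa>) at_top"
  by (rule order_tendstoI) (auto intro: lower upper)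

end

lemma nat_add_meas:
  assumes f: "f \<in> measurable N (count_space UNIV)" and g: "g \<in> measurable N (count_space UNIV)"
  shows "(\<lambda>\<omega>. f \<omega> + g \<omega> :: nat) \<in> measurable N (count_space UNIV)"
proof -
  have h: "(\<lambda>\<omega>. a + g \<omega>) \<in> measurable N (count_space UNIV)" for a :: nat
    using g by (rule measurable_compose) simp
  have "(\<lambda>\<omega>. (\<lambda>a \<omega>. a + g \<omega>) (f \<omega>) \<omega>) \<in> measurable N (count_space UNIV)"
    by (rule measurable_compose_countable'[where I=UNIV and f="\<lambda>a \<omega>. a + g \<omega>" and g=f]) (use h f in auto)
  then show ?thesis by simp
qed

lemma nat_sum_meas:
  assumes "finite A" "\<And>i. i \<in> A \<Longrightarrow> f i \<in> measurable N (count_space UNIV)"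
  shows "(\<lambda>\<omega>. \<Sum>i\<in>A. f i \<omega> :: nat) \<in> measurable N (count_space UNIV)"
  using assms
proof (induction A rule: finite_induct)
  case empty then show ?case by simp
next
  case (insert a A)
  then show ?case by (simp add: nat_add_meas)
qed

lemma gw_meas:
  assumes "\<And>k i. k \<le> n \<Longrightarrow> \<xi> k i \<in> measurable N (count_space UNIV)"
  shows "gw_Z \<xi> n \<in> measurable N (count_space UNIV)"
  using assms
proof (induction n)
  case 0 then show ?case by simp
next
  case (Suc n)
  have h: "(\<lambda>\<omega>. \<Sum>i\<in>{1..z}. \<xi> (Suc n) i \<omega>) \<in> measurable N (count_space UNIV)" for z
    by (rule nat_sum_meas) (use Suc.prems in auto)
  have g: "gw_Z \<xi> n \<in> measurable N (count_space UNIV)" using Suc by auto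
  have "(\<lambda>\<omega>. (\<lambda>z \<omega>. \<Sum>i\<in>{1..z}. \<xi> (Suc n) i \<omega>) (gw_Z \<xi> n \<omega>) \<omega>) \<in> measurable N (count_space UNIV)"
    by (rule measurable_compose_countable'[where I=UNIV and f="\<lambda>z \<omega>. \<Sum>i\<in>{1..z}. \<xi> (Suc n) i \<omega>" and g="gw_Z \<xi> n"])
       (use h g in auto)
  then show ?case by (simp add: fun_eq_iff)
qed

lemma gw_local:
  assumes "\<And>k i. k \<le> n \<Longrightarrow> \<xi> k i \<omega> = \<xi>' k i \<omega>'"
  shows "gw_Z \<xi> n \<omega> = gw_Z \<xi>' n \<omega>'"
  using assms by (induction n) auto

lemma gw_Suc_eq: "gw_Z \<xi> (Suc n) \<omega> = (\<Sum>i<gw_Z \<xi> n \<omega>. \<xi> (Suc n) (Suc i) \<omega>)"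
  by (simp add: sum.atLeast1_atMost_eq)

context prob_space
begin

lemma nat_pmf_sums:
  assumes V[measurable]: "V \<in> measurable M (count_space UNIV)"
  shows "(\<lambda>k. prob {\<omega>\<in>space M. V \<omega> = k}) sums 1"
proof -
  have "(\<lambda>k. prob {\<omega>\<in>space M. V \<omega> = k}) sums prob (\<Union>k. {\<omega>\<in>space M. V \<omega> = k})"
    by (rule finite_measure_UNION) (auto simp: disjoint_family_on_def)
  moreover have "(\<Union>k. {\<omega>\<in>space M. V \<omega> = k}) = space M" by auto
  ultimately show ?thesis by (simp add: prob_space)
qed

lemma nat_tail_sums:
  assumes V[measurable]: "V \<in> measurable M (count_space UNIV)"
  shows "(\<lambda>k. if real k > y then prob {\<omega>\<in>space M. V \<omega> = k} else 0) sums prob {\<omega>\<in>space M. real (V \<omega>) > y}"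
proof -
  define A where "A k = (if real k > y then {\<omega>\<in>space M. V \<omega> = k} else {})" for k
  have "(\<lambda>k. prob (A k)) sums prob (\<Union>k. A k)"
    by (rule finite_measure_UNION) (auto simp: disjoint_family_on_def A_def)
  moreover have "(\<Union>k. A k) = {\<omega>\<in>space M. real (V \<omega>) > y}" by (auto simp: A_def)
  moreover have "prob (A k) = (if real k > y then prob {\<omega>\<in>space M. V \<omega> = k} else 0)" for k
    by (simp add: A_def)
  ultimately show ?thesis by simp
qed

lemma nat_mean:
  assumes V[measurable]: "V \<in> measurable M (count_space UNIV)"
  shows "(\<integral>\<^sup>+\<omega>. ennreal (real (V \<omega>)) \<partial>M) = (\<Sum>k. ennreal (real k * prob {\<omega>\<in>space M. V \<omega> = k}))"
proof -
  have "(\<integral>\<^sup>+\<omega>. ennreal (real (V \<omega>)) \<partial>M) = (\<integral>\<^sup>+\<omega>. (\<Sum>k. ennreal (real k) * indicator {\<omega>\<in>space M. V \<omega> = k} \<omega>) \<partial>M)"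
  proof (intro nn_integral_cong)
    fix \<omega> assume w: "\<omega> \<in> space M"
    have "(\<Sum>k. ennreal (real k) * indicator {\<omega>\<in>space M. V \<omega> = k} \<omega>) = (\<Sum>k\<in>{V \<omega>}. ennreal (real k) * indicator {\<omega>\<in>space M. V \<omega> = k} \<omega>)"
      by (rule suminf_finite) (use w in auto)
    then show "ennreal (real (V \<omega>)) = (\<Sum>k. ennreal (real k) * indicator {\<omega>\<in>space M. V \<omega> = k} \<omega>)"
      using w by simp
  qed
  also have "\<dots> = (\<Sum>k. \<integral>\<^sup>+\<omega>. ennreal (real k) * indicator {\<omega>\<in>space M. V \<omega> = k} \<omega> \<partial>M)"
    by (rule nn_integral_suminf) simp
  also have "\<dots> = (\<Sum>k. ennreal (real k * prob {\<omega>\<in>space M. V \<omega> = k}))"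
    by (simp add: nn_integral_cmult emeasure_eq_measure ennreal_mult)
  finally show ?thesis .
qed

lemma nat_mean_sums:
  assumes V[measurable]: "V \<in> measurable M (count_space UNIV)"
    and r: "(\<integral>\<^sup>+\<omega>. ennreal (real (V \<omega>)) \<partial>M) = ennreal r" "r \<ge> 0"
  shows "(\<lambda>k. real k * prob {\<omega>\<in>space M. V \<omega> = k}) sums r"
proof -
  have "(\<lambda>k. ennreal (real k * prob {\<omega>\<in>space M. V \<omega> = k})) sums ennreal r"
    using summable_sums[OF summableI, of "\<lambda>k. ennreal (real k * prob {\<omega>\<in>space M. V \<omega> = k})"] r nat_mean[OF V]
    by simp
  then show ?thesis using r by (subst (asm) sums_ennreal) auto
qed

lemma indep_var_prob:
  assumes "indep_var (count_space UNIV) U (count_space UNIV) V"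
  shows "prob {\<omega>\<in>space M. U \<omega> \<in> A \<and> V \<omega> \<in> B} = prob {\<omega>\<in>space M. U \<omega> \<in> A} * prob {\<omega>\<in>space M. V \<omega> \<in> B}"
proof -
  have rv: "random_variable (count_space UNIV) U" "random_variable (count_space UNIV) V"
    and ind: "indep_set (sigma_sets (space M) {U -` A \<inter> space M |A. A \<in> sets (count_space UNIV)})
      (sigma_sets (space M) {V -` A \<inter> space M |A. A \<in> sets (count_space UNIV)})"
    using assms unfolding indep_var_eq by auto
  have a: "U -` A \<inter> space M \<in> sigma_sets (space M) {U -` A \<inter> space M |A. A \<in> sets (count_space UNIV)}"
    by (rule sigma_sets.Basic) auto
  have b: "V -` B \<inter> space M \<in> sigma_sets (space M) {V -` A \<inter> space M |A. A \<in> sets (count_space UNIV)}"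
    by (rule sigma_sets.Basic) auto
  have "prob ((U -` A \<inter> space M) \<inter> (V -` B \<inter> space M)) = prob (U -` A \<inter> space M) * prob (V -` B \<inter> space M)"
    using ind a b unfolding indep_sets2_eq by blast
  moreover have "(U -` A \<inter> space M) \<inter> (V -` B \<inter> space M) = {\<omega>\<in>space M. U \<omega> \<in> A \<and> V \<omega> \<in> B}" by auto
  moreover have "U -` A \<inter> space M = {\<omega>\<in>space M. U \<omega> \<in> A}" "V -` B \<inter> space M = {\<omega>\<in>space M. V \<omega> \<in> B}" by auto
  ultimately show ?thesis by simp
qed

lemma indep_var_nn:
  fixes f g :: "'a \<Rightarrow> ennreal"
  assumes "indep_var borel f borel g"
  shows "(\<integral>\<^sup>+\<omega>. f \<omega> * g \<omega> \<partial>M) = (\<integral>\<^sup>+\<omega>. f \<omega> \<partial>M) * (\<integral>\<^sup>+\<omega>. g \<omega> \<partial>M)"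
proof -
  have b: "(\<lambda>_. borel) = case_bool borel borel"
    by (rule ext) (simp split: bool.split)
  have "indep_vars (\<lambda>_. borel) (case_bool f g) UNIV"
    using assms unfolding indep_var_def b .
  then have "(\<integral>\<^sup>+\<omega>. (\<Prod>i\<in>UNIV. case_bool f g i \<omega>) \<partial>M) = (\<Prod>i\<in>UNIV. \<integral>\<^sup>+\<omega>. case_bool f g i \<omega> \<partial>M)"
    by (intro indep_vars_nn_integral) auto
  then show ?thesis by (simp add: UNIV_bool mult.commute)
qed

end


locale gw = rvs +
  fixes \<xi> :: "nat \<Rightarrow> nat \<Rightarrow> 'a \<Rightarrow> nat"
  assumes meas\<xi>[measurable]: "\<And>k i. \<xi> k i \<in> measurable M (count_space UNIV)"
    and indep\<xi>: "indep_vars (\<lambda>_. count_space UNIV) (\<lambda>(k, i). \<xi> k i) UNIV"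
    and ident\<xi>: "\<And>k i. distr M (count_space UNIV) (\<xi> k i) = distr M (count_space UNIV) X"
begin

lemma measZ[measurable]: "gw_Z \<xi> n \<in> measurable M (count_space UNIV)"
  by (rule gw_meas) simp

lemma iid_level: "iidY M X \<kappa> L (\<lambda>i. \<xi> (Suc n) (Suc i))"
proof unfold_locales
  have "indep_vars (\<lambda>j. PiM {(Suc n, Suc j)} (\<lambda>_. count_space UNIV))
      (\<lambda>j \<omega>. restrict (\<lambda>p. (\<lambda>(k, i). \<xi> k i) p \<omega>) {(Suc n, Suc j)}) UNIV"
    by (rule indep_vars_restrict[OF indep\<xi>]) (auto simp: disjoint_family_on_def)
  then have "indep_vars (\<lambda>_. count_space UNIV)
      (\<lambda>j \<omega>. (\<lambda>f. f (Suc n, Suc j)) (restrict (\<lambda>p. (\<lambda>(k, i). \<xi> k i) p \<omega>) {(Suc n, Suc j)})) UNIV"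
    by (rule indep_vars_compose2) (auto intro!: measurable_component_singleton)
  then show "indep_vars (\<lambda>_. count_space UNIV) (\<lambda>i. \<xi> (Suc n) (Suc i)) UNIV" by simp
qed (auto simp: ident\<xi>)

lemma indep_level_k:
  "indep_var (count_space UNIV) (gw_Z \<xi> n) (count_space UNIV) (\<lambda>\<omega>. \<Sum>i<k. \<xi> (Suc n) (Suc i) \<omega>)"
proof -
  define A where "A = {p :: nat \<times> nat. fst p \<le> n}"
  define B where "B = {p :: nat \<times> nat. fst p = Suc n}"
  have ir: "indep_var (PiM A (\<lambda>_. count_space UNIV)) (\<lambda>\<omega>. restrict (\<lambda>p. (\<lambda>(k, i). \<xi> k i) p \<omega>) A)
                (PiM B (\<lambda>_. count_space UNIV)) (\<lambda>\<omega>. restrict (\<lambda>p. (\<lambda>(k, i). \<xi> k i) p \<omega>) B)"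
    by (rule indep_var_restrict[OF indep\<xi>]) (auto simp: A_def B_def)
  have Gm: "gw_Z (\<lambda>k i f. f (k, i)) n \<in> measurable (PiM A (\<lambda>_. count_space UNIV)) (count_space UNIV)"
    by (rule gw_meas) (auto simp: A_def intro!: measurable_component_singleton)
  have Hm: "(\<lambda>f. \<Sum>i<k. f (Suc n, Suc i) :: nat) \<in> measurable (PiM B (\<lambda>_. count_space UNIV)) (count_space UNIV)"
    by (rule nat_sum_meas) (auto simp: B_def intro!: measurable_component_singleton)
  have "indep_var (count_space UNIV) (gw_Z (\<lambda>k i f. f (k, i)) n \<circ> (\<lambda>\<omega>. restrict (\<lambda>p. (\<lambda>(k, i). \<xi> k i) p \<omega>) A))
      (count_space UNIV) ((\<lambda>f. \<Sum>i<k. f (Suc n, Suc i) :: nat) \<circ> (\<lambda>\<omega>. restrict (\<lambda>p. (\<lambda>(k, i). \<xi> k i) p \<omega>) B))"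
    by (rule indep_var_compose[OF ir Gm Hm])
  moreover have "gw_Z (\<lambda>k i f. f (k, i)) n \<circ> (\<lambda>\<omega>. restrict (\<lambda>p. (\<lambda>(k, i). \<xi> k i) p \<omega>) A) = gw_Z \<xi> n"
    by (rule ext) (simp, rule gw_local, simp add: A_def)
  moreover have "(\<lambda>f. \<Sum>i<k. f (Suc n, Suc i) :: nat) \<circ> (\<lambda>\<omega>. restrict (\<lambda>p. (\<lambda>(k, i). \<xi> k i) p \<omega>) B) = (\<lambda>\<omega>. \<Sum>i<k. \<xi> (Suc n) (Suc i) \<omega>)"
    by (rule ext) (simp add: B_def)
  ultimately show ?thesis by simp
qed


lemma step_prob:
  "(\<lambda>k. prob {\<omega>\<in>space M. gw_Z \<xi> n \<omega> = k} * prob {\<omega>\<in>space M. real (\<Sum>i<k. \<xi> (Suc n) (Suc i) \<omega>) > x})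
     sums prob {\<omega>\<in>space M. real (gw_Z \<xi> (Suc n) \<omega>) > x}"
proof -
  define D where "D k = {\<omega>\<in>space M. gw_Z \<xi> n \<omega> = k \<and> real (\<Sum>i<k. \<xi> (Suc n) (Suc i) \<omega>) > x}" for k
  have Dm: "D k \<in> events" for k
  proof -
    have "(\<lambda>\<omega>. \<Sum>i<k. \<xi> (Suc n) (Suc i) \<omega>) \<in> measurable M (count_space UNIV)"
      by (rule nat_sum_meas) auto
    then have "{\<omega>\<in>space M. real (\<Sum>i<k. \<xi> (Suc n) (Suc i) \<omega>) > x} \<in> events"
      by measurable
    moreover have "{\<omega>\<in>space M. gw_Z \<xi> n \<omega> = k} \<in> events" by measurable
    ultimately have "{\<omega>\<in>space M. gw_Z \<xi> n \<omega> = k} \<inter> {\<omega>\<in>space M. real (\<Sum>i<k. \<xi> (Suc n) (Suc i) \<omega>) > x} \<in> events"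
      by auto
    moreover have "D k = {\<omega>\<in>space M. gw_Z \<xi> n \<omega> = k} \<inter> {\<omega>\<in>space M. real (\<Sum>i<k. \<xi> (Suc n) (Suc i) \<omega>) > x}"
      by (auto simp: D_def)
    ultimately show ?thesis by simp
  qed
  have "(\<lambda>k. prob (D k)) sums prob (\<Union>k. D k)"
    by (rule finite_measure_UNION) (use Dm in \<open>auto simp: disjoint_family_on_def D_def\<close>)
  moreover have "(\<Union>k. D k) = {\<omega>\<in>space M. real (gw_Z \<xi> (Suc n) \<omega>) > x}"
    by (auto simp: D_def gw_Suc_eq simp del: gw_Z.simps(2))
  moreover have "prob (D k) = prob {\<omega>\<in>space M. gw_Z \<xi> n \<omega> = k} * prob {\<omega>\<in>space M. real (\<Sum>i<k. \<xi> (Suc n) (Suc i) \<omega>) > x}" for k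
    using indep_var_prob[OF indep_level_k[of n k], of "{k}" "{v. real v > x}"] by (simp add: D_def)
  ultimately show ?thesis by simp
qed

lemma nn_xi: "(\<integral>\<^sup>+\<omega>. ennreal (real (\<xi> k i \<omega>)) \<partial>M) = ennreal \<alpha>"
proof -
  have "(\<integral>\<^sup>+\<omega>. ennreal (real (\<xi> k i \<omega>)) \<partial>M) = (\<integral>\<^sup>+v. ennreal (real v) \<partial>distr M (count_space UNIV) (\<xi> k i))"
    by (rule nn_integral_distr[symmetric]) auto
  also have "\<dots> = (\<integral>\<^sup>+v. ennreal (real v) \<partial>distr M (count_space UNIV) X)" by (simp add: ident\<xi>)
  also have "\<dots> = (\<integral>\<^sup>+\<omega>. ennreal (real (X \<omega>)) \<partial>M)" by (rule nn_integral_distr) auto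
  also have "\<dots> = ennreal \<alpha>" unfolding \<alpha>_def by (rule nn_integral_eq_integral[OF integrable_X]) auto
  finally show ?thesis .
qed

lemma step_mean:
  assumes m: "(\<lambda>k. real k * prob {\<omega>\<in>space M. gw_Z \<xi> n \<omega> = k}) sums m"
  shows "(\<lambda>k. real k * prob {\<omega>\<in>space M. gw_Z \<xi> (Suc n) \<omega> = k}) sums (\<alpha> * m)"
proof -
  define p where "p k = prob {\<omega>\<in>space M. gw_Z \<xi> n \<omega> = k}" for k
  have m0: "m \<ge> 0" by (rule sums_le[OF _ sums_zero m]) auto
  have SY: "(\<integral>\<^sup>+\<omega>. ennreal (real (\<Sum>i<k. \<xi> (Suc n) (Suc i) \<omega>)) \<partial>M) = ennreal (real k * \<alpha>)" for k
  proof -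
    have "(\<integral>\<^sup>+\<omega>. ennreal (real (\<Sum>i<k. \<xi> (Suc n) (Suc i) \<omega>)) \<partial>M) = (\<integral>\<^sup>+\<omega>. (\<Sum>i<k. ennreal (real (\<xi> (Suc n) (Suc i) \<omega>))) \<partial>M)"
      by (intro nn_integral_cong) (simp add: of_nat_sum)
    also have "\<dots> = (\<Sum>i<k. \<integral>\<^sup>+\<omega>. ennreal (real (\<xi> (Suc n) (Suc i) \<omega>)) \<partial>M)"
      by (rule nn_integral_sum) simp
    also have "\<dots> = (\<Sum>i<k. ennreal \<alpha>)" by (simp add: nn_xi)
    also have "\<dots> = ennreal (real k * \<alpha>)" using alpha_nonneg by (simp add: ennreal_mult ennreal_of_nat_eq_real_of_nat)
    finally show ?thesis .
  qed
  have IN: "(\<integral>\<^sup>+\<omega>. ennreal (indicator {k} (gw_Z \<xi> n \<omega>)) \<partial>M) = ennreal (p k)" for k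
  proof -
    have "(\<integral>\<^sup>+\<omega>. ennreal (indicator {k} (gw_Z \<xi> n \<omega>)) \<partial>M) = (\<integral>\<^sup>+\<omega>. indicator {\<omega>\<in>space M. gw_Z \<xi> n \<omega> = k} \<omega> \<partial>M)"
      by (intro nn_integral_cong) (auto simp: indicator_def)
    also have "\<dots> = ennreal (p k)" by (simp add: p_def emeasure_eq_measure)
    finally show ?thesis .
  qed
  have T: "(\<integral>\<^sup>+\<omega>. ennreal (indicator {k} (gw_Z \<xi> n \<omega>)) * ennreal (real (\<Sum>i<k. \<xi> (Suc n) (Suc i) \<omega>)) \<partial>M)
      = ennreal (\<alpha> * (real k * p k))" for k
  proof -
    have "indep_var borel ((\<lambda>z. ennreal (indicator {k} z)) \<circ> gw_Z \<xi> n) borel ((\<lambda>v. ennreal (real v)) \<circ> (\<lambda>\<omega>. \<Sum>i<k. \<xi> (Suc n) (Suc i) \<omega>))"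
      by (rule indep_var_compose[OF indep_level_k]) auto
    then have "(\<integral>\<^sup>+\<omega>. ennreal (indicator {k} (gw_Z \<xi> n \<omega>)) * ennreal (real (\<Sum>i<k. \<xi> (Suc n) (Suc i) \<omega>)) \<partial>M)
       = (\<integral>\<^sup>+\<omega>. ennreal (indicator {k} (gw_Z \<xi> n \<omega>)) \<partial>M) * (\<integral>\<^sup>+\<omega>. ennreal (real (\<Sum>i<k. \<xi> (Suc n) (Suc i) \<omega>)) \<partial>M)"
      using indep_var_nn by (simp add: comp_def)
    also have "\<dots> = ennreal (\<alpha> * (real k * p k))"
    proof -
      have p0: "0 \<le> p k" by (simp add: p_def)
      show ?thesis unfolding IN SY using alpha_nonneg p0 by (simp add: ennreal_mult[symmetric] mult_ac)
    qed
    finally show ?thesis .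
  qed
  have "(\<integral>\<^sup>+\<omega>. ennreal (real (gw_Z \<xi> (Suc n) \<omega>)) \<partial>M)
      = (\<integral>\<^sup>+\<omega>. (\<Sum>k. ennreal (indicator {k} (gw_Z \<xi> n \<omega>)) * ennreal (real (\<Sum>i<k. \<xi> (Suc n) (Suc i) \<omega>))) \<partial>M)"
  proof (intro nn_integral_cong)
    fix \<omega> assume "\<omega> \<in> space M"
    have "(\<Sum>k. ennreal (indicator {k} (gw_Z \<xi> n \<omega>)) * ennreal (real (\<Sum>i<k. \<xi> (Suc n) (Suc i) \<omega>)))
        = (\<Sum>k\<in>{gw_Z \<xi> n \<omega>}. ennreal (indicator {k} (gw_Z \<xi> n \<omega>)) * ennreal (real (\<Sum>i<k. \<xi> (Suc n) (Suc i) \<omega>)))"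
      by (rule suminf_finite) auto
    then show "ennreal (real (gw_Z \<xi> (Suc n) \<omega>)) = (\<Sum>k. ennreal (indicator {k} (gw_Z \<xi> n \<omega>)) * ennreal (real (\<Sum>i<k. \<xi> (Suc n) (Suc i) \<omega>)))"
      by (simp add: gw_Suc_eq del: gw_Z.simps(2))
  qed
  also have "\<dots> = (\<Sum>k. \<integral>\<^sup>+\<omega>. ennreal (indicator {k} (gw_Z \<xi> n \<omega>)) * ennreal (real (\<Sum>i<k. \<xi> (Suc n) (Suc i) \<omega>)) \<partial>M)"
  proof (rule nn_integral_suminf)
    fix k
    have m1[measurable]: "(\<lambda>\<omega>. ennreal (indicator {k} (gw_Z \<xi> n \<omega>))) \<in> borel_measurable M"
      using measZ by (rule measurable_compose) simp
    have "(\<lambda>\<omega>. \<Sum>i<k. \<xi> (Suc n) (Suc i) \<omega>) \<in> measurable M (count_space UNIV)"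
      by (rule nat_sum_meas) auto
    then have m2[measurable]: "(\<lambda>\<omega>. ennreal (real (\<Sum>i<k. \<xi> (Suc n) (Suc i) \<omega>))) \<in> borel_measurable M"
      by (rule measurable_compose) simp
    show "(\<lambda>\<omega>. ennreal (indicator {k} (gw_Z \<xi> n \<omega>)) * ennreal (real (\<Sum>i<k. \<xi> (Suc n) (Suc i) \<omega>))) \<in> borel_measurable M"
      by measurable
  qed
  also have "\<dots> = (\<Sum>k. ennreal (\<alpha> * (real k * p k)))" by (simp only: T)
  also have "\<dots> = ennreal (\<alpha> * m)"
  proof -
    have "(\<lambda>k. \<alpha> * (real k * p k)) sums (\<alpha> * m)" using m by (intro sums_mult) (simp add: p_def)
    then have "(\<lambda>k. ennreal (\<alpha> * (real k * p k))) sums ennreal (\<alpha> * m)"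
      using alpha_nonneg m0 by (subst sums_ennreal) (auto simp: p_def)
    then show ?thesis by (rule sums_unique[symmetric])
  qed
  finally show ?thesis
    by (intro nat_mean_sums) (use alpha_nonneg m0 in auto)
qed


lemma gw_main:
  assumes a1: "\<alpha> < 1"
  shows "(\<lambda>k. real k * prob {\<omega>\<in>space M. gw_Z \<xi> n \<omega> = k}) sums \<alpha>^n \<and>
    ((\<lambda>x. prob {\<omega>\<in>space M. real (gw_Z \<xi> n \<omega>) > x} / Fb x) \<longlongrightarrow> (\<alpha>^n - \<alpha> powr (\<kappa> * real n)) / (\<alpha> - \<alpha> powr \<kappa>)) at_top"
proof (induction n)
  case 0
  have "(\<lambda>k. real k * prob {\<omega>\<in>space M. gw_Z \<xi> 0 \<omega> = k}) = (\<lambda>k. if k = 1 then 1 else 0)"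
    by (auto simp: fun_eq_iff prob_space)
  then have s0: "(\<lambda>k. real k * prob {\<omega>\<in>space M. gw_Z \<xi> 0 \<omega> = k}) sums \<alpha>^0"
    using sums_single[of 1 "\<lambda>_. 1::real"] by simp
  have "\<forall>\<^sub>F x in at_top. 0 = prob {\<omega>\<in>space M. real (gw_Z \<xi> 0 \<omega>) > x} / Fb x"
    using eventually_ge_at_top[of 1] by eventually_elim auto
  then have "((\<lambda>x. prob {\<omega>\<in>space M. real (gw_Z \<xi> 0 \<omega>) > x} / Fb x) \<longlongrightarrow> 0) at_top"
    by (rule Lim_transform_eventually[OF tendsto_const])
  moreover have "(\<alpha>^0 - \<alpha> powr (\<kappa> * real 0)) / (\<alpha> - \<alpha> powr \<kappa>) = 0" using alpha_pos by simp
  ultimately show ?case using s0 by simp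
next
  case (Suc n)
  define cn where "cn = (\<alpha>^n - \<alpha> powr (\<kappa> * real n)) / (\<alpha> - \<alpha> powr \<kappa>)"
  have pm: "(\<lambda>k. real k * prob {\<omega>\<in>space M. gw_Z \<xi> n \<omega> = k}) sums \<alpha>^n" and tl: "((\<lambda>x. prob {\<omega>\<in>space M. real (gw_Z \<xi> n \<omega>) > x} / Fb x) \<longlongrightarrow> cn) at_top"
    using Suc by (auto simp: cn_def)
  interpret Y: iidY M X \<kappa> L "\<lambda>i. \<xi> (Suc n) (Suc i)" by (rule iid_level)
  interpret R0: rsum M X \<kappa> L "(\<lambda>k. prob {\<omega>\<in>space M. gw_Z \<xi> n \<omega> = k})" "\<alpha>^n"
  proof unfold_locales
    show "0 \<le> prob {\<omega>\<in>space M. gw_Z \<xi> n \<omega> = k}" for k by simp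
    show "(\<lambda>k. prob {\<omega>\<in>space M. gw_Z \<xi> n \<omega> = k}) sums 1" by (rule nat_pmf_sums) simp
    show "(\<lambda>k. real k * prob {\<omega>\<in>space M. gw_Z \<xi> n \<omega> = k}) sums \<alpha>^n" by (rule pm)
  qed
  have Tl_eq: "R0.Tl y = prob {\<omega>\<in>space M. real (gw_Z \<xi> n \<omega>) > y}" for y
    using sums_unique[OF R0.Tl_sums[of y]] sums_unique[OF nat_tail_sums[OF measZ[of n], of y]]
    by simp
  interpret R: rsumq M X \<kappa> L "(\<lambda>k. prob {\<omega>\<in>space M. gw_Z \<xi> n \<omega> = k})" "\<alpha>^n" Y.q cn
  proof unfold_locales
    show "((\<lambda>y. R0.Tl y / Fb y) \<longlongrightarrow> cn) at_top" using tl by (simp add: Tl_eq)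
  qed (fact Y.q_nonneg Y.q_le1 Y.q_low1 Y.q_lln Y.q_up Y.q_up2)+
  have eq: "(\<Sum>k. prob {\<omega>\<in>space M. gw_Z \<xi> n \<omega> = k} * Y.q k x) = prob {\<omega>\<in>space M. real (gw_Z \<xi> (Suc n) \<omega>) > x}" for x
    unfolding Y.q_def by (rule sums_unique[symmetric, OF step_prob])
  have lim: "((\<lambda>x. prob {\<omega>\<in>space M. real (gw_Z \<xi> (Suc n) \<omega>) > x} / Fb x) \<longlongrightarrow> \<alpha>^n + cn * \<alpha> powr \<kappa>) at_top"
    using R.random_sum_asymp by (simp add: eq)
  have ne: "\<alpha> - \<alpha> powr \<kappa> \<noteq> 0"
  proof -
    have "\<alpha> powr \<kappa> < \<alpha> powr 1" using alpha_pos a1 kappa by (intro powr_less_mono') auto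
    then show ?thesis using alpha_pos by simp
  qed
  have val: "\<alpha>^n + cn * \<alpha> powr \<kappa> = (\<alpha>^Suc n - \<alpha> powr (\<kappa> * real (Suc n))) / (\<alpha> - \<alpha> powr \<kappa>)"
  proof -
    have "\<alpha> powr (\<kappa> * real (Suc n)) = \<alpha> powr \<kappa> * \<alpha> powr (\<kappa> * real n)"
      by (simp add: powr_add[symmetric] algebra_simps)
    then show ?thesis using ne by (simp add: cn_def field_simps)
  qed
  have "(\<lambda>k. real k * prob {\<omega>\<in>space M. gw_Z \<xi> (Suc n) \<omega> = k}) sums (\<alpha> * \<alpha>^n)"
    by (rule step_mean) (rule pm)
  then show ?case using lim val by simp
qed

end

theorem lemma2p2:
  fixes M :: "'a measure" and \<xi> :: "nat \<Rightarrow> nat \<Rightarrow> 'a \<Rightarrow> nat"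
    and X :: "'a \<Rightarrow> nat" and \<kappa> :: real and n :: nat
  assumes "prob_space M"
    and meas: "\<And>k i. \<xi> k i \<in> measurable M (count_space UNIV)"
    and measX: "X \<in> measurable M (count_space UNIV)"
    and indep: "prob_space.indep_vars M (\<lambda>_. count_space UNIV) (\<lambda>(k, i). \<xi> k i) UNIV"
    and ident: "\<And>k i. distr M (count_space UNIV) (\<xi> k i) = distr M (count_space UNIV) X"
    and mean: "prob_space.expectation M (\<lambda>\<omega>. real (X \<omega>)) < 1"
    and kappa: "\<kappa> > 1"
    and regvar: "\<exists>L. slowly_varying L \<and>
        (\<forall>x>0. measure M {\<omega> \<in> space M. real (X \<omega>) > x} = x powr (-\<kappa>) * L x)"
    and "n \<ge> 1"
  shows "(\<lambda>x. measure M {\<omega> \<in> space M. real (gw_Z \<xi> n \<omega>) > x}) \<sim>[at_top]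
         (\<lambda>x. (let \<alpha> = prob_space.expectation M (\<lambda>\<omega>. real (X \<omega>)) in
                 (\<alpha> ^ n - \<alpha> powr (\<kappa> * real n)) / (\<alpha> - \<alpha> powr \<kappa>))
              * measure M {\<omega> \<in> space M. real (X \<omega>) > x})"
proof -
  interpret prob_space M by (rule assms(1))
  obtain L where L: "slowly_varying L" "\<And>x. x > 0 \<Longrightarrow> measure M {\<omega> \<in> space M. real (X \<omega>) > x} = x powr (-\<kappa>) * L x"
    using regvar by auto
  interpret G: gw M X \<kappa> L \<xi>
    by unfold_locales (use meas measX indep ident kappa L in auto)
  have a1: "G.\<alpha> < 1" using mean by (simp add: G.\<alpha>_def)
  have main: "((\<lambda>x. prob {\<omega>\<in>space M. real (gw_Z \<xi> n \<omega>) > x} / G.Fb x) \<longlongrightarrow>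
      (G.\<alpha>^n - G.\<alpha> powr (\<kappa> * real n)) / (G.\<alpha> - G.\<alpha> powr \<kappa>)) at_top"
    using G.gw_main[OF a1, of n] by blast
  define cn where "cn = (G.\<alpha>^n - G.\<alpha> powr (\<kappa> * real n)) / (G.\<alpha> - G.\<alpha> powr \<kappa>)"
  have apos: "G.\<alpha> > 0" by (rule G.alpha_pos)
  have cpos: "cn > 0"
  proof -
    have d: "G.\<alpha> powr \<kappa> < G.\<alpha> powr 1" using apos a1 kappa by (intro powr_less_mono') auto
    have "G.\<alpha> powr (\<kappa> * real n) < G.\<alpha> powr (real n)"
      using apos a1 kappa \<open>n \<ge> 1\<close> by (intro powr_less_mono') auto
    also have "G.\<alpha> powr (real n) = G.\<alpha>^n" using apos by (simp add: powr_realpow)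
    finally show ?thesis using d apos by (simp add: cn_def)
  qed
  have "(\<lambda>x. prob {\<omega>\<in>space M. real (gw_Z \<xi> n \<omega>) > x}) \<sim>[at_top] (\<lambda>x. cn * G.Fb x)"
    by (rule asymp_equivI'_const) (use main cpos in \<open>auto simp: cn_def\<close>)
  then show ?thesis by (simp add: Let_def G.Fb_def G.\<alpha>_def cn_def)
qed

end
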